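(* There exists a family $\mathcal{E}\subset\mathcal{T}$ with $|\mathcal{E}|=2^{2^{\mathfrak{c}}}$ such that for every $\tau\in\mathcal{E}$ we have $\Gamma(\tau)=\mathbb{R}$ and the Hausdorff space $(\mathbb{R},\tau)$ is separable and connected, and the spaces $(\mathbb{R},\tau)$, $\tau\in\mathcal{E}$, are incomparable.
   Context: $\eta$ denotes the Euclidean topology on $\mathbb{R}$; $\mathcal{T}$ is the family of all topologies on $\mathbb{R}$ finer than $\eta$. $\Gamma(\tau)=\{x\in\mathbb{R}:\mathcal{U}_\eta(x)\neq\mathcal{U}_\tau(x)\}$ where $\mathcal{U}_\tau(x)$ is the neighborhood filter of $x$ in $\tau$. Topological spaces $X_i$ ($i\in I$) are incomparable if, for all $i,j\in I$, whenever $X_i$ is homeomorphic to a subspace $S_j$ of $X_j$, then $i=j$ and $S_j=X_j$. $\mathfrak{c}=2^{\aleph_0}$. *)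

theory Defs
  imports "HOL-Analysis.Analysis" "HOL-Library.Equipollence"
begin

definition finer_than_euclidean :: "real topology \<Rightarrow> bool" where
  "finer_than_euclidean \<tau> \<longleftrightarrow> topspace \<tau> = UNIV \<and> (\<forall>S. open S \<longrightarrow> openin \<tau> S)"

definition nbhds :: "'a topology \<Rightarrow> 'a \<Rightarrow> 'a set set" where
  "nbhds \<tau> x = {N. \<exists>U. openin \<tau> U \<and> x \<in> U \<and> U \<subseteq> N}"

definition Gamma :: "real topology \<Rightarrow> real set" where
  "Gamma \<tau> = {x. nbhds euclidean x \<noteq> nbhds \<tau> x}"

definition incomparable_family :: "'i set \<Rightarrow> ('i \<Rightarrow> 'a topology) \<Rightarrow> bool" where
  "incomparable_family I X \<longleftrightarrow>
     (\<forall>i\<in>I. \<forall>j\<in>I. \<forall>S. S \<subseteq> topspace (X j) \<and> X i homeomorphic_space subtopology (X j) S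
        \<longrightarrow> i = j \<and> S = topspace (X j))"

end

theory Submission
  imports Defs
begin


definition cg :: "(nat \<Rightarrow> bool) \<Rightarrow> real" where
  "cg a = (\<Sum>n. (if a n then 2 else 0) / 3^(Suc n))"

lemma cg_summable: "summable (\<lambda>n. (if a n then 2 else 0) / (3::real)^(Suc n))"
proof (rule summable_comparison_test')
  show "summable (\<lambda>n. 2 * (1/3::real)^(Suc n))"
    by (intro summable_mult summable_geometric_iff[THEN iffD2] summable_Suc_iff[THEN iffD2]) auto
  show "norm ((if a n then 2 else 0) / (3::real)^(Suc n)) \<le> 2 * (1/3)^(Suc n)" for n
    by (auto simp: power_divide)
qed

lemma cg_split: "cg a = (if a 0 then 2/3 else 0) + cg (\<lambda>n. a (Suc n)) / 3"
proof -
  let ?f = "\<lambda>n. (if a n then 2 else 0) / (3::real)^(Suc n)"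
  have h: "(\<Sum>n. ?f (Suc n)) = suminf ?f - ?f 0"
    using suminf_split_head[OF cg_summable[of a]] .
  have "(\<Sum>n. ?f (Suc n)) = (\<Sum>n. (if a (Suc n) then 2 else 0) / (3::real)^(Suc n)) / 3"
    using suminf_divide[OF cg_summable[of "\<lambda>n. a (Suc n)"], of 3] by (simp add: field_simps)
  with h show ?thesis unfolding cg_def by auto
qed

lemma cg_nonneg: "0 \<le> cg a"
  unfolding cg_def by (intro suminf_nonneg cg_summable) auto

lemma cg_le1: "cg a \<le> 1"
proof -
  have "cg a \<le> (\<Sum>n. 2 * (1/3::real)^(Suc n))"
    unfolding cg_def
    by (intro suminf_le cg_summable summable_mult summable_geometric_iff[THEN iffD2] summable_Suc_iff[THEN iffD2]) (auto simp: power_divide)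
  also have "\<dots> = 1"
  proof -
    have g: "(\<lambda>n. (1/3::real)^n) sums (3/2)"
      using geometric_sums[of "1/3::real"] by simp
    have "(\<lambda>n. (2/3) * (1/3::real)^n) sums ((2/3) * (3/2))"
      by (intro sums_mult g)
    moreover have "(\<lambda>n. (2/3) * (1/3::real)^n) = (\<lambda>n. 2 * (1/3::real)^(Suc n))"
      by auto
    ultimately have "(\<lambda>n. 2 * (1/3::real)^(Suc n)) sums 1" by simp
    thus ?thesis by (simp add: sums_iff)
  qed
  finally show ?thesis .
qed

lemma cg_head_true: "a 0 \<Longrightarrow> 2/3 \<le> cg a"
  using cg_split[of a] cg_nonneg[of "\<lambda>n. a (Suc n)"] by auto

lemma cg_head_false: "\<not> a 0 \<Longrightarrow> cg a \<le> 1/3"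
  using cg_split[of a] cg_le1[of "\<lambda>n. a (Suc n)"] by auto

fun pre :: "nat \<Rightarrow> (nat \<Rightarrow> bool) \<Rightarrow> int" where
  "pre 0 a = 0"
| "pre (Suc n) a = 3 * pre n a + (if a n then 2 else 0)"

lemma pre_cong: "(\<And>m. m < n \<Longrightarrow> a m = b m) \<Longrightarrow> pre n a = pre n b"
  by (induction n) auto

lemma cg_shift: "3^n * cg a = of_int (pre n a) + cg (\<lambda>m. a (m + n))"
proof (induction n)
  case 0 then show ?case by simp
next
  case (Suc n)
  have "3^(Suc n) * cg a = 3 * (of_int (pre n a) + cg (\<lambda>m. a (m + n)))"
    using Suc by simp
  also have "cg (\<lambda>m. a (m + n)) = (if a n then 2/3 else 0) + cg (\<lambda>m. a (m + Suc n)) / 3"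
    using cg_split[of "\<lambda>m. a (m + n)"] by simp
  finally show ?case by (simp add: algebra_simps)
qed

lemma cg_inj: "inj cg"
proof (rule injI)
  fix a b assume eq: "cg a = cg b"
  have "\<forall>m<n. a m = b m" for n
  proof (induction n)
    case 0 then show ?case by simp
  next
    case (Suc n)
    have p: "pre n a = pre n b" using Suc pre_cong by blast
    have "cg (\<lambda>m. a (m + n)) = cg (\<lambda>m. b (m + n))"
      using cg_shift[of n a] cg_shift[of n b] eq p by simp
    hence "a n = b n"
      using cg_head_true[of "\<lambda>m. a (m + n)"] cg_head_false[of "\<lambda>m. a (m + n)"]
        cg_head_true[of "\<lambda>m. b (m + n)"] cg_head_false[of "\<lambda>m. b (m + n)"] by force
    then show ?case using Suc less_Suc_eq by auto
  qed
  thus "a = b" by blast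
qed

definition KK :: "real set" where
  "KK = {x. \<forall>n::nat. \<forall>k::int. 1/6 \<le> \<bar>3^n * x - of_int k - 1/2\<bar>}"

lemma cg_in_KK: "cg a \<in> KK"
  unfolding KK_def
proof (intro CollectI allI)
  fix n :: nat and k :: int
  define t where "t = cg (\<lambda>m. a (m + n))"
  have e: "3^n * cg a - of_int k - 1/2 = of_int (pre n a - k) + (t - 1/2)"
    using cg_shift[of n a] by (simp add: t_def)
  have t: "(0 \<le> t \<and> t \<le> 1/3) \<or> (2/3 \<le> t \<and> t \<le> 1)"
    unfolding t_def using cg_head_true cg_head_false cg_nonneg cg_le1 by (metis add_0)
  show "1/6 \<le> \<bar>3^n * cg a - of_int k - 1/2\<bar>"
    unfolding e
  proof (cases "pre n a - k = 0")
    case True then show "1/6 \<le> \<bar>real_of_int (pre n a - k) + (t - 1/2)\<bar>" using t by auto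
  next
    case False
    then have "1 \<le> \<bar>real_of_int (pre n a - k)\<bar>" by linarith
    then show "1/6 \<le> \<bar>real_of_int (pre n a - k) + (t - 1/2)\<bar>" using t by linarith
  qed
qed

lemma closed_KK: "closed KK"
  unfolding KK_def
  by (intro closed_Collect_all closed_Collect_le continuous_intros)

definition DD :: "real set" where
  "DD = {(of_int k + 1/2) / 3^n | k n. True}"

lemma countable_DD: "countable DD"
proof -
  have "DD = (\<lambda>(k::int, n::nat). (of_int k + 1/2) / 3^n) ` UNIV" unfolding DD_def by auto
  thus ?thesis by (metis countable_image countableI_type)
qed

lemma DD_KK: "DD \<inter> KK = {}"
proof -
  { fix k :: int and n :: nat
    have "3^n * ((of_int k + 1/2) / 3^n) - of_int k - 1/2 = (0::real)" by simp
    hence "(of_int k + 1/2) / 3^n \<notin> KK" unfolding KK_def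
      by (auto intro!: exI[of _ n] exI[of _ k]) }
  thus ?thesis unfolding DD_def by blast
qed

lemma DD_dense: assumes "0 < e" shows "\<exists>d\<in>DD. dist d x < e"
proof -
  obtain n :: nat where n: "1/e < 3^n"
    using real_arch_pow[of 3 "1/e"] by auto
  hence n': "1/3^n < e" using assms by (simp add: field_simps)
  define k where "k = floor (3^n * x)"
  have k: "of_int k \<le> 3^n * x" "3^n * x < of_int k + 1" unfolding k_def by linarith+
  define d where "d = (of_int k + 1/2) / (3::real)^n"
  have "d \<in> DD" unfolding DD_def d_def by blast
  moreover have "3^n * d = of_int k + 1/2" unfolding d_def by simp
  hence "\<bar>3^n * d - 3^n * x\<bar> \<le> 1/2" using k by linarith
  hence "3^n * \<bar>d - x\<bar> \<le> 1/2" by (metis abs_of_pos abs_mult right_diff_distrib zero_less_power zero_less_numeral)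
  hence "\<bar>d - x\<bar> \<le> 1/2 / 3^n" by (simp add: field_simps)
  hence "dist d x < e" using n' by (simp add: dist_real_def)
  ultimately show ?thesis by blast
qed

lemma interior_KK: "interior KK = {}"
proof (rule ccontr)
  assume "interior KK \<noteq> {}"
  then obtain x where "x \<in> interior KK" by auto
  then obtain e where e: "0 < e" "ball x e \<subseteq> KK" by (meson mem_interior)
  obtain d where "d \<in> DD" "dist d x < e" using DD_dense[OF e(1)] by blast
  hence "d \<in> ball x e" by (simp add: dist_commute)
  thus False using e DD_KK \<open>d \<in> DD\<close> by blast
qed


definition goodI :: "real set set \<Rightarrow> bool" where
  "goodI \<C> \<longleftrightarrow> {} \<in> \<C> \<and> (\<forall>A\<in>\<C>. \<forall>B\<in>\<C>. A \<union> B \<in> \<C>) \<and> (\<forall>A\<in>\<C>. \<forall>B. B \<subseteq> A \<longrightarrow> B \<in> \<C>)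
     \<and> (\<forall>A\<in>\<C>. A \<inter> DD = {})"

definition dopen :: "real set set \<Rightarrow> real set \<Rightarrow> bool" where
  "dopen \<C> V \<longleftrightarrow> (\<forall>x\<in>V. \<exists>e>0. \<exists>C\<in>\<C>. ball x e - C \<subseteq> V)"

definition dtop :: "real set set \<Rightarrow> real topology" where
  "dtop \<C> = topology (dopen \<C>)"

lemma istopology_dopen: assumes "goodI \<C>" shows "istopology (dopen \<C>)"
  unfolding istopology_def
proof (intro conjI allI impI)
  fix S T assume S: "dopen \<C> S" and T: "dopen \<C> T"
  show "dopen \<C> (S \<inter> T)" unfolding dopen_def
  proof
    fix x assume "x \<in> S \<inter> T"
    then obtain e1 C1 e2 C2 where "e1 > 0" "C1 \<in> \<C>" "ball x e1 - C1 \<subseteq> S" "e2 > 0" "C2 \<in> \<C>" "ball x e2 - C2 \<subseteq> T"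
      using S T unfolding dopen_def by blast
    moreover have "C1 \<union> C2 \<in> \<C>" using assms \<open>C1 \<in> \<C>\<close> \<open>C2 \<in> \<C>\<close> unfolding goodI_def by blast
    moreover have "ball x (min e1 e2) - (C1 \<union> C2) \<subseteq> S \<inter> T"
      using \<open>ball x e1 - C1 \<subseteq> S\<close> \<open>ball x e2 - C2 \<subseteq> T\<close> by auto
    moreover have "min e1 e2 > 0" using \<open>e1 > 0\<close> \<open>e2 > 0\<close> by simp
    ultimately show "\<exists>e>0. \<exists>C\<in>\<C>. ball x e - C \<subseteq> S \<inter> T"
      by blast
  qed
next
  fix K assume "\<forall>S\<in>K. dopen \<C> S"
  then show "dopen \<C> (\<Union>K)" unfolding dopen_def
  proof (intro ballI)
    fix x assume H: "\<forall>S\<in>K. \<forall>x\<in>S. \<exists>e>0. \<exists>C\<in>\<C>. ball x e - C \<subseteq> S" and "x \<in> \<Union>K"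
    then obtain S where "S \<in> K" "x \<in> S" by blast
    then obtain e C where "e > 0" "C \<in> \<C>" "ball x e - C \<subseteq> S" using H by blast
    then show "\<exists>e>0. \<exists>C\<in>\<C>. ball x e - C \<subseteq> \<Union>K" using \<open>S \<in> K\<close> by blast
  qed
qed

lemma openin_dtop: "goodI \<C> \<Longrightarrow> openin (dtop \<C>) V \<longleftrightarrow> dopen \<C> V"
  unfolding dtop_def using istopology_dopen by simp

lemma openin_dtopI: "goodI \<C> \<Longrightarrow> (\<And>x. x \<in> V \<Longrightarrow> \<exists>e>0. \<exists>C\<in>\<C>. ball x e - C \<subseteq> V) \<Longrightarrow> openin (dtop \<C>) V"
  by (simp add: openin_dtop dopen_def)

lemma openin_dtopD: "goodI \<C> \<Longrightarrow> openin (dtop \<C>) V \<Longrightarrow> x \<in> V \<Longrightarrow> \<exists>e>0. \<exists>C\<in>\<C>. ball x e - C \<subseteq> V"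
  by (simp add: openin_dtop dopen_def)

lemma open_dtop: assumes "goodI \<C>" "open S" shows "openin (dtop \<C>) S"
proof (rule openin_dtopI[OF assms(1)])
  fix x assume "x \<in> S"
  then obtain e where "e > 0" "ball x e \<subseteq> S" using assms(2) open_contains_ball by blast
  then show "\<exists>e>0. \<exists>C\<in>\<C>. ball x e - C \<subseteq> S" using assms(1) unfolding goodI_def by blast
qed

lemma topspace_dtop: "goodI \<C> \<Longrightarrow> topspace (dtop \<C>) = UNIV"
  using open_dtop[of \<C> UNIV] openin_subset by auto

lemma openin_ball_diff: assumes "goodI \<C>" "C \<in> \<C>" shows "openin (dtop \<C>) (ball x e - C)"
proof (rule openin_dtopI[OF assms(1)])
  fix y assume y: "y \<in> ball x e - C"
  then obtain r where "r > 0" "ball y r \<subseteq> ball x e"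
    by (meson DiffD1 open_ball open_contains_ball)
  then show "\<exists>r>0. \<exists>C'\<in>\<C>. ball y r - C' \<subseteq> ball x e - C" using assms(2) by blast
qed

lemma nbhds_dtop: assumes "goodI \<C>"
  shows "N \<in> nbhds (dtop \<C>) x \<longleftrightarrow> (\<exists>e>0. \<exists>C\<in>\<C>. x \<notin> C \<and> ball x e - C \<subseteq> N)"
proof
  assume "N \<in> nbhds (dtop \<C>) x"
  then obtain U where U: "openin (dtop \<C>) U" "x \<in> U" "U \<subseteq> N" unfolding nbhds_def by blast
  then obtain e C where "e > 0" "C \<in> \<C>" "ball x e - C \<subseteq> U" using openin_dtopD[OF assms] by blast
  moreover have "C - {x} \<in> \<C>" using assms \<open>C \<in> \<C>\<close> unfolding goodI_def by blast
  ultimately show "\<exists>e>0. \<exists>C\<in>\<C>. x \<notin> C \<and> ball x e - C \<subseteq> N"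
    using U by (intro exI[of _ e] conjI bexI[of _ "C - {x}"]) auto
next
  assume "\<exists>e>0. \<exists>C\<in>\<C>. x \<notin> C \<and> ball x e - C \<subseteq> N"
  then obtain e C where "e > 0" "C \<in> \<C>" "x \<notin> C" "ball x e - C \<subseteq> N" by blast
  then show "N \<in> nbhds (dtop \<C>) x" unfolding nbhds_def
    using openin_ball_diff[OF assms \<open>C \<in> \<C>\<close>, of x e] by auto
qed

lemma DD_in_open: assumes "open Wo" "z \<in> Wo" shows "\<exists>d\<in>DD. d \<in> Wo"
proof -
  obtain r where "r > 0" "ball z r \<subseteq> Wo" using assms open_contains_ball by blast
  moreover obtain d where "d \<in> DD" "dist d z < r" using DD_dense[OF \<open>r > 0\<close>] by blast
  moreover have "d \<in> ball z r" using \<open>dist d z < r\<close> by (simp add: dist_commute)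
  ultimately show ?thesis by blast
qed

lemma Hausdorff_dtop: assumes "goodI \<C>" shows "Hausdorff_space (dtop \<C>)"
  unfolding Hausdorff_space_def
proof (intro allI impI)
  fix x y :: real assume "x \<in> topspace (dtop \<C>) \<and> y \<in> topspace (dtop \<C>) \<and> x \<noteq> y"
  then have "dist x y > 0" by simp
  define e where "e = dist x y / 2"
  have "disjnt (ball x e) (ball y e)" unfolding disjnt_def e_def
    by (rule disjoint_ballI) simp
  then show "\<exists>U V. openin (dtop \<C>) U \<and> openin (dtop \<C>) V \<and> x \<in> U \<and> y \<in> V \<and> disjnt U V"
    using open_dtop[OF assms] \<open>dist x y > 0\<close> by (intro exI[of _ "ball x e"] exI[of _ "ball y e"]) (auto simp: e_def)
qed

lemma separable_dtop: assumes "goodI \<C>" shows "separable_space (dtop \<C>)"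
  unfolding separable_space_def
proof (intro exI[of _ DD] conjI)
  show "countable DD" by (rule countable_DD)
  show "DD \<subseteq> topspace (dtop \<C>)" using topspace_dtop[OF assms] by simp
  show "dtop \<C> closure_of DD = topspace (dtop \<C>)"
    unfolding closure_of_def topspace_dtop[OF assms]
  proof (safe)
    fix x T assume "x \<in> T" "openin (dtop \<C>) T"
    then obtain e C where "e > 0" "C \<in> \<C>" "ball x e - C \<subseteq> T" using openin_dtopD[OF assms] by blast
    moreover obtain d where "d \<in> DD" "d \<in> ball x e" using DD_in_open[of "ball x e" x] \<open>e > 0\<close> by auto
    moreover have "d \<notin> C" using assms \<open>C \<in> \<C>\<close> \<open>d \<in> DD\<close> unfolding goodI_def by blast
    ultimately show "\<exists>y\<in>DD. y \<in> T" by blast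
  qed
qed

lemma connectedin_dtop: assumes "goodI \<C>" "connected I" shows "connectedin (dtop \<C>) I"
proof -
  have key: "\<exists>e>0. ball x e \<inter> I \<subseteq> E1"
    if E1: "openin (dtop \<C>) E1" and E2: "openin (dtop \<C>) E2" and cov: "I \<subseteq> E1 \<union> E2"
      and dis: "E1 \<inter> E2 \<inter> I = {}" and x: "x \<in> E1" "x \<in> I" for E1 E2 x
  proof -
    obtain e C where e: "e > 0" "C \<in> \<C>" "ball x e - C \<subseteq> E1" using openin_dtopD[OF assms(1) E1 x(1)] by blast
    have "ball x e \<inter> I \<subseteq> E1"
    proof
      fix y assume y: "y \<in> ball x e \<inter> I"
      show "y \<in> E1"
      proof (rule ccontr)
        assume "y \<notin> E1"
        hence "y \<in> E2" using cov y by blast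
        then obtain d C' where d: "d > 0" "C' \<in> \<C>" "ball y d - C' \<subseteq> E2" using openin_dtopD[OF assms(1) E2] by blast
        have "x \<noteq> y" using \<open>y \<notin> E1\<close> x by auto
        define r where "r = min d (e - dist x y)"
        have "dist x y < e" using y by simp
        then have r: "r > 0" using d by (simp add: r_def)
        have rb1: "ball y r \<subseteq> ball x e"
          unfolding ball_subset_ball_iff r_def by (simp add: dist_commute min_def)
        have rb2: "ball y r \<subseteq> ball y d"
          unfolding ball_subset_ball_iff r_def by simp
        define Wo where "Wo = {min x y <..< max x y} \<inter> ball y r"
        have "open Wo" unfolding Wo_def by auto
        obtain z where "z \<in> Wo"
        proof (cases "y < x")
          case True
          then have "y + min r (x - y) / 2 \<in> Wo" using r unfolding Wo_def by (auto simp: dist_real_def min_def field_simps)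
          then show ?thesis using that by blast
        next
          case False
          then have "x < y" using \<open>x \<noteq> y\<close> by auto
          then have "y - min r (y - x) / 2 \<in> Wo" using r unfolding Wo_def by (auto simp: dist_real_def min_def field_simps)
          then show ?thesis using that by blast
        qed
        then obtain q where q: "q \<in> DD" "q \<in> Wo" using DD_in_open[OF \<open>open Wo\<close>] by blast
        have "q \<notin> C" "q \<notin> C'" using assms(1) e(2) d(2) q(1) unfolding goodI_def by blast+
        moreover have "q \<in> I"
        proof -
          have q1: "min x y < q" "q < max x y" using q(2) unfolding Wo_def by auto
          have "x \<in> I" "y \<in> I" using x y by auto
          show ?thesis
          proof (cases "y < x")
            case True
            then show ?thesis using connectedD_interval[OF assms(2) \<open>y \<in> I\<close> \<open>x \<in> I\<close>, of q] q1 by simp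
          next
            case False
            then show ?thesis using connectedD_interval[OF assms(2) \<open>x \<in> I\<close> \<open>y \<in> I\<close>, of q] q1 by simp
          qed
        qed
        moreover have "q \<in> ball x e" "q \<in> ball y d" using rb1 rb2 q(2) unfolding Wo_def by auto
        ultimately have "q \<in> E1 \<inter> E2 \<inter> I" using e(3) d(3) by blast
        then show False using dis by blast
      qed
    qed
    then show ?thesis using e(1) by blast
  qed
  show ?thesis unfolding connectedin topspace_dtop[OF assms(1)]
  proof (intro conjI notI subset_UNIV)
    assume "\<exists>E1 E2. openin (dtop \<C>) E1 \<and> openin (dtop \<C>) E2 \<and> I \<subseteq> E1 \<union> E2 \<and> E1 \<inter> E2 \<inter> I = {} \<and> E1 \<inter> I \<noteq> {} \<and> E2 \<inter> I \<noteq> {}"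
    then obtain E1 E2 where E: "openin (dtop \<C>) E1" "openin (dtop \<C>) E2" "I \<subseteq> E1 \<union> E2" "E1 \<inter> E2 \<inter> I = {}" "E1 \<inter> I \<noteq> {}" "E2 \<inter> I \<noteq> {}"
      by blast
    have E': "I \<subseteq> E2 \<union> E1" "E2 \<inter> E1 \<inter> I = {}" using E by auto
    define U1 where "U1 = {y. \<exists>e>0. ball y e \<inter> I \<subseteq> E1}"
    define U2 where "U2 = {y. \<exists>e>0. ball y e \<inter> I \<subseteq> E2}"
    have opn: "open {y. \<exists>e>0. ball y e \<inter> I \<subseteq> E}" for E
      unfolding open_contains_ball
    proof (intro ballI)
      fix y assume "y \<in> {y. \<exists>e>0. ball y e \<inter> I \<subseteq> E}"
      then obtain e where e: "e > 0" "ball y e \<inter> I \<subseteq> E" by blast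
      have "ball y (e/2) \<subseteq> {y. \<exists>e>0. ball y e \<inter> I \<subseteq> E}"
      proof
        fix z assume "z \<in> ball y (e/2)"
        then have "ball z (e/2) \<subseteq> ball y e" unfolding ball_subset_ball_iff by (simp add: dist_commute)
        then have "ball z (e/2) \<inter> I \<subseteq> E" using e by blast
        then show "z \<in> {y. \<exists>e>0. ball y e \<inter> I \<subseteq> E}" using e(1) by (intro CollectI exI[of _ "e/2"]) simp
      qed
      then show "\<exists>r>0. ball y r \<subseteq> {y. \<exists>e>0. ball y e \<inter> I \<subseteq> E}" using e(1) by (intro exI[of _ "e/2"]) simp
    qed
    have "open U1" "open U2" unfolding U1_def U2_def using opn by auto
    have s1: "U1 \<inter> I \<subseteq> E1"
    proof
      fix y assume "y \<in> U1 \<inter> I"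
      then obtain e where "e > 0" "ball y e \<inter> I \<subseteq> E1" "y \<in> I" unfolding U1_def by blast
      moreover have "y \<in> ball y e" using \<open>e > 0\<close> by simp
      ultimately show "y \<in> E1" by blast
    qed
    have s2: "U2 \<inter> I \<subseteq> E2"
    proof
      fix y assume "y \<in> U2 \<inter> I"
      then obtain e where "e > 0" "ball y e \<inter> I \<subseteq> E2" "y \<in> I" unfolding U2_def by blast
      moreover have "y \<in> ball y e" using \<open>e > 0\<close> by simp
      ultimately show "y \<in> E2" by blast
    qed
    have c1: "E1 \<inter> I \<subseteq> U1"
    proof
      fix x assume "x \<in> E1 \<inter> I"
      then have "\<exists>e>0. ball x e \<inter> I \<subseteq> E1" using key[OF E(1) E(2) E(3) E(4)] by blast
      then show "x \<in> U1" unfolding U1_def by blast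
    qed
    have c2: "E2 \<inter> I \<subseteq> U2"
    proof
      fix x assume "x \<in> E2 \<inter> I"
      then have "\<exists>e>0. ball x e \<inter> I \<subseteq> E2" using key[OF E(2) E(1) E'(1) E'(2)] by blast
      then show "x \<in> U2" unfolding U2_def by blast
    qed
    have "I \<subseteq> U1 \<union> U2" using E(3) c1 c2 by blast
    moreover have "U1 \<inter> U2 \<inter> I = {}" using s1 s2 E(4) by blast
    moreover have "U1 \<inter> I \<noteq> {}" using c1 E(5) by blast
    moreover have "U2 \<inter> I \<noteq> {}" using c2 E(6) by blast
    moreover have "connectedin euclidean I" using assms(2) by simp
    then have "\<forall>E1 E2. openin euclidean E1 \<longrightarrow> openin euclidean E2 \<longrightarrow> I \<subseteq> E1 \<union> E2 \<longrightarrow> E1 \<inter> E2 \<inter> I = {} \<longrightarrow> E1 \<inter> I = {} \<or> E2 \<inter> I = {}"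
      unfolding connectedin by blast
    then have "openin euclidean U1 \<longrightarrow> openin euclidean U2 \<longrightarrow> I \<subseteq> U1 \<union> U2 \<longrightarrow> U1 \<inter> U2 \<inter> I = {} \<longrightarrow> U1 \<inter> I = {} \<or> U2 \<inter> I = {}"
      by blast
    moreover have "openin euclidean U1" "openin euclidean U2" using \<open>open U1\<close> \<open>open U2\<close> by auto
    ultimately show False by blast
  qed
qed

lemma connected_dtop: "goodI \<C> \<Longrightarrow> connected_space (dtop \<C>)"
  using connectedin_dtop[of \<C> UNIV] connectedin_topspace topspace_dtop by fastforce

definition rac :: "real set \<Rightarrow> real \<Rightarrow> bool" where
  "rac C x \<longleftrightarrow> (\<forall>d>0. \<exists>c\<in>C. x < c \<and> c < x + d)"
definition lac :: "real set \<Rightarrow> real \<Rightarrow> bool" where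
  "lac C x \<longleftrightarrow> (\<forall>d>0. \<exists>c\<in>C. x - d < c \<and> c < x)"

definition RT :: "real topology \<Rightarrow> real \<Rightarrow> bool" where
  "RT \<tau> x \<longleftrightarrow> (\<exists>N\<in>nbhds \<tau> x. \<forall>d>0. \<not> {x<..<x+d} \<subseteq> N)"
definition LT :: "real topology \<Rightarrow> real \<Rightarrow> bool" where
  "LT \<tau> x \<longleftrightarrow> (\<exists>N\<in>nbhds \<tau> x. \<forall>d>0. \<not> {x-d<..<x} \<subseteq> N)"

lemma RT_dtop: assumes "goodI \<C>" shows "RT (dtop \<C>) x \<longleftrightarrow> (\<exists>C\<in>\<C>. rac C x)"
proof
  assume "RT (dtop \<C>) x"
  then obtain N where N: "N \<in> nbhds (dtop \<C>) x" "\<forall>d>0. \<not> {x<..<x+d} \<subseteq> N" unfolding RT_def by blast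
  then obtain e C where e: "e > 0" "C \<in> \<C>" "ball x e - C \<subseteq> N" using nbhds_dtop[OF assms] by blast
  have "rac C x" unfolding rac_def
  proof (intro allI impI)
    fix d :: real assume "d > 0"
    then have "min d e > 0" using e(1) by simp
    then have "\<not> {x<..<x + min d e} \<subseteq> N" using N(2) by blast
    then obtain z where z: "z \<in> {x<..<x + min d e}" "z \<notin> N" by blast
    then have "z \<in> ball x e" by (auto simp: dist_real_def)
    then have "z \<in> C" using z e(3) by blast
    then show "\<exists>c\<in>C. x < c \<and> c < x + d" using z by auto
  qed
  then show "\<exists>C\<in>\<C>. rac C x" using e(2) by blast
next
  assume "\<exists>C\<in>\<C>. rac C x"
  then obtain C where C: "C \<in> \<C>" "rac C x" by blast
  have C': "C - {x} \<in> \<C>" using assms C(1) unfolding goodI_def by blast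
  have "ball x 1 - (C - {x}) \<in> nbhds (dtop \<C>) x"
    using nbhds_dtop[OF assms] C' by (intro iffD2[OF nbhds_dtop[OF assms]] exI[of _ 1] bexI[of _ "C - {x}"]) auto
  moreover have "\<not> {x<..<x+d} \<subseteq> ball x 1 - (C - {x})" if "d > 0" for d
  proof -
    have "min d 1 > 0" using \<open>d > 0\<close> by simp
    then obtain c where c: "c \<in> C" "x < c" "c < x + min d 1" using C(2) unfolding rac_def by blast
    then have "c \<in> {x<..<x+d}" "c \<in> C - {x}" by auto
    then show ?thesis by blast
  qed
  ultimately show "RT (dtop \<C>) x" unfolding RT_def by blast
qed

lemma LT_dtop: assumes "goodI \<C>" shows "LT (dtop \<C>) x \<longleftrightarrow> (\<exists>C\<in>\<C>. lac C x)"
proof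
  assume "LT (dtop \<C>) x"
  then obtain N where N: "N \<in> nbhds (dtop \<C>) x" "\<forall>d>0. \<not> {x-d<..<x} \<subseteq> N" unfolding LT_def by blast
  then obtain e C where e: "e > 0" "C \<in> \<C>" "ball x e - C \<subseteq> N" using nbhds_dtop[OF assms] by blast
  have "lac C x" unfolding lac_def
  proof (intro allI impI)
    fix d :: real assume "d > 0"
    then have "min d e > 0" using e(1) by simp
    then have "\<not> {x - min d e<..<x} \<subseteq> N" using N(2) by blast
    then obtain z where z: "z \<in> {x - min d e<..<x}" "z \<notin> N" by blast
    then have "z \<in> ball x e" by (auto simp: dist_real_def)
    then have "z \<in> C" using z e(3) by blast
    then show "\<exists>c\<in>C. x - d < c \<and> c < x" using z by (intro bexI[of _ z]) auto
  qed
  then show "\<exists>C\<in>\<C>. lac C x" using e(2) by blast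
next
  assume "\<exists>C\<in>\<C>. lac C x"
  then obtain C where C: "C \<in> \<C>" "lac C x" by blast
  have C': "C - {x} \<in> \<C>" using assms C(1) unfolding goodI_def by blast
  have "ball x 1 - (C - {x}) \<in> nbhds (dtop \<C>) x"
    using nbhds_dtop[OF assms] C' by (intro iffD2[OF nbhds_dtop[OF assms]] exI[of _ 1] bexI[of _ "C - {x}"]) auto
  moreover have "\<not> {x-d<..<x} \<subseteq> ball x 1 - (C - {x})" if "d > 0" for d
  proof -
    have "min d 1 > 0" using \<open>d > 0\<close> by simp
    then obtain c where c: "c \<in> C" "x - min d 1 < c" "c < x" using C(2) unfolding lac_def by blast
    then have "c \<in> {x-d<..<x}" "c \<in> C - {x}" by auto
    then show ?thesis by blast
  qed
  ultimately show "LT (dtop \<C>) x" unfolding LT_def by blast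
qed

lemma Gamma_dtop: assumes "goodI \<C>" "\<And>x. \<exists>C\<in>\<C>. rac C x \<or> lac C x"
  shows "Gamma (dtop \<C>) = UNIV"
proof -
  { fix x
    obtain C where C: "C \<in> \<C>" "rac C x \<or> lac C x" using assms(2) by blast
    have C': "C - {x} \<in> \<C>" using assms C(1) unfolding goodI_def by blast
    have N: "ball x 1 - (C - {x}) \<in> nbhds (dtop \<C>) x"
      using C' by (intro iffD2[OF nbhds_dtop[OF assms(1)]] exI[of _ 1] bexI[of _ "C - {x}"]) auto
    have "ball x 1 - (C - {x}) \<notin> nbhds euclidean x"
    proof
      assume "ball x 1 - (C - {x}) \<in> nbhds euclidean x"
      then obtain U where U: "open U" "x \<in> U" "U \<subseteq> ball x 1 - (C - {x})" unfolding nbhds_def by auto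
      then obtain r where r: "r > 0" "ball x r \<subseteq> U" using open_contains_ball by blast
      obtain c where "c \<in> C" "c \<noteq> x" "dist c x < r"
      proof (cases "rac C x")
        case True
        then obtain c where "c \<in> C" "x < c" "c < x + r" using r(1) unfolding rac_def by blast
        then show ?thesis using that[of c] by (simp add: dist_real_def)
      next
        case False
        then have "lac C x" using C(2) by blast
        then obtain c where "c \<in> C" "x - r < c" "c < x" using r(1) unfolding lac_def by blast
        then show ?thesis using that[of c] by (simp add: dist_real_def)
      qed
      then have "c \<in> ball x r" by (simp add: dist_commute)
      then show False using r U \<open>c \<in> C\<close> \<open>c \<noteq> x\<close> by blast
    qed
    then have "x \<in> Gamma (dtop \<C>)" unfolding Gamma_def using N by blast }
  then show ?thesis by blast
qed


lemma betw:
  fixes h :: "real \<Rightarrow> real"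
  assumes inj: "inj h" and conn: "\<And>a b. connected (h ` {a..b})" and ab: "a < b" and bc: "b < c"
  shows "(h a < h b \<and> h b < h c) \<or> (h b < h a \<and> h c < h b)"
proof (rule ccontr)
  assume nc: "\<not> ?thesis"
  have d1: "h a \<noteq> h b" "h b \<noteq> h c" "h a \<noteq> h c" using ab bc by (simp_all add: inj_eq[OF inj])
  have "(h a < h b \<and> h c < h b) \<or> (h b < h a \<and> h b < h c)" using nc d1 by linarith
  then show False
  proof
    assume pk: "h a < h b \<and> h c < h b"
    define v where "v = (max (h a) (h c) + h b) / 2"
    have v: "h a \<le> v" "h c \<le> v" "v < h b" using pk by (auto simp: v_def)
    have "v \<in> h ` {a..b}"
      using connectedD_interval[OF conn[of a b], of "h a" "h b" v] ab v by auto
    then obtain s where s: "s \<in> {a..b}" "h s = v" by blast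
    have "v \<in> h ` {b..c}"
      using connectedD_interval[OF conn[of b c], of "h c" "h b" v] bc v by auto
    then obtain t where t: "t \<in> {b..c}" "h t = v" by blast
    have "s \<noteq> b" "t \<noteq> b" using s t v by auto
    then have "s \<noteq> t" using s t by auto
    moreover have "h s = h t" using s t by simp
    ultimately show False by (simp add: inj_eq[OF inj])
  next
    assume vl: "h b < h a \<and> h b < h c"
    define v where "v = (min (h a) (h c) + h b) / 2"
    have v: "v \<le> h a" "v \<le> h c" "h b < v" using vl by (auto simp: v_def)
    have "v \<in> h ` {a..b}"
      using connectedD_interval[OF conn[of a b], of "h b" "h a" v] ab v by auto
    then obtain s where s: "s \<in> {a..b}" "h s = v" by blast
    have "v \<in> h ` {b..c}"
      using connectedD_interval[OF conn[of b c], of "h b" "h c" v] bc v by auto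
    then obtain t where t: "t \<in> {b..c}" "h t = v" by blast
    have "s \<noteq> b" "t \<noteq> b" using s t v by auto
    then have "s \<noteq> t" using s t by auto
    moreover have "h s = h t" using s t by simp
    ultimately show False by (simp add: inj_eq[OF inj])
  qed
qed

lemma darboux_mono:
  fixes h :: "real \<Rightarrow> real"
  assumes inj: "inj h" and conn: "\<And>a b. connected (h ` {a..b})"
  shows "(\<forall>x y. x < y \<longrightarrow> h x < h y) \<or> (\<forall>x y. x < y \<longrightarrow> h y < h x)"
proof -
  have T1: "h x < h y \<longleftrightarrow> h y < h z" if "x < y" "y < z" for x y z
    using betw[OF inj conn that] by auto
  have T2: "h x < h y \<longleftrightarrow> h x < h z" if "x < y" "y < z" for x y z
    using betw[OF inj conn that] by auto
  have T3: "h m < h y \<longleftrightarrow> h m < h 1" if "m < y" "m < 1" for m y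
  proof -
    consider "y < 1" | "y = 1" | "1 < y" by linarith
    then show ?thesis
    proof cases
      case 1 then show ?thesis using T2[of m y 1] that by auto
    next
      case 2 then show ?thesis by simp
    next
      case 3 then show ?thesis using T2[of m 1 y] that by auto
    qed
  qed
  have main: "h x < h y \<longleftrightarrow> h 0 < h 1" if "x < y" for x y
  proof -
    define m where "m = min x 0 - 1"
    have m: "m < x" "m < 0" "m < 1" by (auto simp: m_def)
    have "h x < h y \<longleftrightarrow> h m < h y" using T1[of m x y] T2[of m x y] m that by blast
    also have "\<dots> \<longleftrightarrow> h m < h 1" using T3[of m y] m that by linarith
    also have "\<dots> \<longleftrightarrow> h 0 < h 1" using T1[of m 0 1] T2[of m 0 1] m by auto
    finally show ?thesis .
  qed
  show ?thesis
  proof (cases "h 0 < h 1")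
    case True then show ?thesis using main by blast
  next
    case False
    have "h y < h x" if "x < y" for x y
    proof -
      have "h x \<noteq> h y" using that by (simp add: inj_eq[OF inj])
      then show ?thesis using main[OF that] False by linarith
    qed
    then show ?thesis by blast
  qed
qed

lemma incr_cont:
  fixes h :: "real \<Rightarrow> real"
  assumes mono: "\<forall>x y. x < y \<longrightarrow> h x < h y" and conn: "connected (range h)"
  shows "continuous_on UNIV h"
proof (rule continuous_at_imp_continuous_on, intro ballI)
  fix x :: real
  have le: "h a \<le> h b \<longleftrightarrow> a \<le> b" for a b
  proof (cases a b rule: linorder_cases)
    case less then show ?thesis using mono[rule_format, of a b] by simp
  next
    case equal then show ?thesis by simp
  next
    case greater then show ?thesis using mono[rule_format, of b a] by simp
  qed
  show "isCont h x" unfolding continuous_at_eps_delta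
  proof (intro allI impI)
    fix e :: real assume e: "e > 0"
    define v1 where "v1 = max (h x - e/2) (h (x - 1))"
    define v2 where "v2 = min (h x + e/2) (h (x + 1))"
    have hx1: "h (x - 1) < h x" "h x < h (x + 1)" using mono by auto
    have "v1 \<in> range h"
      using connectedD_interval[OF conn, of "h (x - 1)" "h x" v1] hx1 e by (auto simp: v1_def)
    then obtain a1 where a1: "h a1 = v1" by auto
    have "v2 \<in> range h"
      using connectedD_interval[OF conn, of "h x" "h (x + 1)" v2] hx1 e by (auto simp: v2_def)
    then obtain a2 where a2: "h a2 = v2" by auto
    have "v1 < h x" "h x < v2" using hx1 e by (auto simp: v1_def v2_def)
    then have "a1 < x" "x < a2" using a1 a2 le[of x a1] le[of a2 x] by linarith+
    define d where "d = min (x - a1) (a2 - x)"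
    have "d > 0" using \<open>a1 < x\<close> \<open>x < a2\<close> by (simp add: d_def)
    moreover have "dist (h x') (h x) < e" if "dist x' x < d" for x'
    proof -
      have "a1 < x'" "x' < a2" using that by (auto simp: d_def dist_real_def)
      then have "v1 < h x'" "h x' < v2" using mono a1 a2 by auto
      then show ?thesis by (auto simp: v1_def v2_def dist_real_def)
    qed
    ultimately show "\<exists>d>0. \<forall>x'. dist x' x < d \<longrightarrow> dist (h x') (h x) < e" by blast
  qed
qed

lemma mono_cont:
  fixes h :: "real \<Rightarrow> real"
  assumes mono: "(\<forall>x y. x < y \<longrightarrow> h x < h y) \<or> (\<forall>x y. x < y \<longrightarrow> h y < h x)" and conn: "connected (range h)"
  shows "continuous_on UNIV h"
  using mono
proof
  assume "\<forall>x y. x < y \<longrightarrow> h x < h y" then show ?thesis using incr_cont conn by blast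
next
  assume d: "\<forall>x y. x < y \<longrightarrow> h y < h x"
  have "connected (uminus ` range h)"
    by (intro connected_continuous_image conn continuous_intros)
  moreover have "uminus ` range h = range (\<lambda>x. - h x)" by auto
  ultimately have "continuous_on UNIV (\<lambda>x. - h x)" using d by (intro incr_cont) auto
  from continuous_on_minus[OF this] show ?thesis by simp
qed

lemma image_incr:
  fixes h :: "real \<Rightarrow> real"
  assumes mono: "\<forall>x y. x < y \<longrightarrow> h x < h y" and cont: "continuous_on UNIV h" and ab: "a < b"
  shows "h ` {a<..<b} = {h a<..<h b}"
proof
  show "h ` {a<..<b} \<subseteq> {h a<..<h b}" using mono by auto
  show "{h a<..<h b} \<subseteq> h ` {a<..<b}"
  proof
    fix v assume v: "v \<in> {h a<..<h b}"
    have "connected (h ` {a..b})" by (intro connected_continuous_image continuous_on_subset[OF cont]) auto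
    then have "v \<in> h ` {a..b}" using connectedD_interval[of "h ` {a..b}" "h a" "h b" v] v ab by auto
    then obtain y where y: "y \<in> {a..b}" "v = h y" by blast
    then have "y \<noteq> a" "y \<noteq> b" using v by auto
    then show "v \<in> h ` {a<..<b}" using y by auto
  qed
qed

lemma image_decr:
  fixes h :: "real \<Rightarrow> real"
  assumes mono: "\<forall>x y. x < y \<longrightarrow> h y < h x" and cont: "continuous_on UNIV h" and ab: "a < b"
  shows "h ` {a<..<b} = {h b<..<h a}"
proof
  show "h ` {a<..<b} \<subseteq> {h b<..<h a}" using mono by auto
  show "{h b<..<h a} \<subseteq> h ` {a<..<b}"
  proof
    fix v assume v: "v \<in> {h b<..<h a}"
    have "connected (h ` {a..b})" by (intro connected_continuous_image continuous_on_subset[OF cont]) auto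
    then have "v \<in> h ` {a..b}" using connectedD_interval[of "h ` {a..b}" "h b" "h a" v] v ab by auto
    then obtain y where y: "y \<in> {a..b}" "v = h y" by blast
    then have "y \<noteq> a" "y \<noteq> b" using v by auto
    then show "v \<in> h ` {a<..<b}" using y by auto
  qed
qed

lemma side_transfer:
  assumes inj: "inj h"
    and A: "\<And>N. N \<in> nbhds \<tau>1 x \<Longrightarrow> h ` N \<in> nbhds \<tau>2 (h x)"
    and B: "\<And>M. M \<in> nbhds \<tau>2 (h x) \<Longrightarrow> h -` M \<in> nbhds \<tau>1 x"
    and P1: "\<And>d. d > 0 \<Longrightarrow> \<exists>\<delta>>0. h ` J1 \<delta> \<subseteq> J2 d"
    and P2: "\<And>d. d > 0 \<Longrightarrow> \<exists>\<delta>>0. J2 \<delta> \<subseteq> h ` J1 d"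
  shows "(\<exists>N\<in>nbhds \<tau>1 x. \<forall>d>0. \<not> J1 d \<subseteq> N) \<longleftrightarrow> (\<exists>M\<in>nbhds \<tau>2 (h x). \<forall>d>0. \<not> J2 d \<subseteq> M)"
proof
  assume "\<exists>N\<in>nbhds \<tau>1 x. \<forall>d>0. \<not> J1 d \<subseteq> N"
  then obtain N where N: "N \<in> nbhds \<tau>1 x" "\<forall>d>0. \<not> J1 d \<subseteq> N" by blast
  have "\<not> J2 d \<subseteq> h ` N" if d: "d > 0" for d
  proof
    assume J: "J2 d \<subseteq> h ` N"
    obtain \<delta> where "\<delta> > 0" "h ` J1 \<delta> \<subseteq> J2 d" using P1[OF d] by blast
    then have "h ` J1 \<delta> \<subseteq> h ` N" using J by blast
    then have "J1 \<delta> \<subseteq> N" using inj_image_subset_iff[OF inj] by blast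
    then show False using N(2) \<open>\<delta> > 0\<close> by blast
  qed
  then show "\<exists>M\<in>nbhds \<tau>2 (h x). \<forall>d>0. \<not> J2 d \<subseteq> M" using A[OF N(1)] by blast
next
  assume "\<exists>M\<in>nbhds \<tau>2 (h x). \<forall>d>0. \<not> J2 d \<subseteq> M"
  then obtain M where M: "M \<in> nbhds \<tau>2 (h x)" "\<forall>d>0. \<not> J2 d \<subseteq> M" by blast
  have "\<not> J1 d \<subseteq> h -` M" if d: "d > 0" for d
  proof
    assume J: "J1 d \<subseteq> h -` M"
    obtain \<delta> where "\<delta> > 0" "J2 \<delta> \<subseteq> h ` J1 d" using P2[OF d] by blast
    then have "J2 \<delta> \<subseteq> M" using J by blast
    then show False using M(2) \<open>\<delta> > 0\<close> by blast
  qed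
  then show "\<exists>N\<in>nbhds \<tau>1 x. \<forall>d>0. \<not> J1 d \<subseteq> N" using B[OF M(1)] by blast
qed


lemma nbhdsE: "N \<in> nbhds \<tau> x \<Longrightarrow> (\<And>U. openin \<tau> U \<Longrightarrow> x \<in> U \<Longrightarrow> U \<subseteq> N \<Longrightarrow> P) \<Longrightarrow> P"
  unfolding nbhds_def by blast

lemma nbhdsI: "openin \<tau> U \<Longrightarrow> x \<in> U \<Longrightarrow> U \<subseteq> N \<Longrightarrow> N \<in> nbhds \<tau> x"
  unfolding nbhds_def by blast

lemma cont_small:
  fixes h :: "real \<Rightarrow> real"
  assumes "continuous_on UNIV h" "d > 0"
  shows "\<exists>\<delta>>0. \<forall>y. \<bar>y - x\<bar> < \<delta> \<longrightarrow> \<bar>h y - h x\<bar> < d"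
proof -
  have "isCont h x" using assms(1) continuous_on_eq_continuous_at by blast
  then show ?thesis using assms(2) unfolding continuous_at_eps_delta dist_real_def by blast
qed

lemma open_range_mono:
  fixes h :: "real \<Rightarrow> real"
  assumes mono: "(\<forall>x y. x < y \<longrightarrow> h x < h y) \<or> (\<forall>x y. x < y \<longrightarrow> h y < h x)"
    and conn: "connected (range h)"
  shows "open (range h)"
  unfolding open_subopen[of "range h"]
proof
  fix y assume "y \<in> range h"
  then obtain x where y: "y = h x" by blast
  define a where "a = min (h (x - 1)) (h (x + 1))"
  define b where "b = max (h (x - 1)) (h (x + 1))"
  have ab: "a < y" "y < b" using mono unfolding a_def b_def y by auto
  have "{a<..<b} \<subseteq> range h"
  proof
    fix z assume z: "z \<in> {a<..<b}"
    have "a \<in> range h" "b \<in> range h" unfolding a_def b_def by (auto simp: min_def max_def)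
    then show "z \<in> range h" using connectedD_interval[OF conn, of a b z] z by auto
  qed
  then show "\<exists>T. open T \<and> y \<in> T \<and> T \<subseteq> range h" using ab by (intro exI[of _ "{a<..<b}"]) auto
qed

lemma continuous_map_id_dtop: "goodI \<C> \<Longrightarrow> continuous_map (dtop \<C>) euclidean id"
  unfolding continuous_map topspace_dtop
  by (auto intro: open_dtop)

lemma embed:
  assumes g1: "goodI \<C>1" and g2: "goodI \<C>2"
    and hm: "homeomorphic_maps (dtop \<C>1) (subtopology (dtop \<C>2) S) h k"
  shows "inj h \<and> range h = S \<and> continuous_on UNIV h \<and>
   (((\<forall>x y. x < y \<longrightarrow> h x < h y) \<and> (\<forall>x. (RT (dtop \<C>1) x \<longleftrightarrow> RT (dtop \<C>2) (h x)) \<and> (LT (dtop \<C>1) x \<longleftrightarrow> LT (dtop \<C>2) (h x))))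
   \<or> ((\<forall>x y. x < y \<longrightarrow> h y < h x) \<and> (\<forall>x. (RT (dtop \<C>1) x \<longleftrightarrow> LT (dtop \<C>2) (h x)) \<and> (LT (dtop \<C>1) x \<longleftrightarrow> RT (dtop \<C>2) (h x)))))"
proof -
  let ?t1 = "dtop \<C>1" and ?t2 = "dtop \<C>2"
  let ?Y = "subtopology ?t2 S"
  have tY: "topspace ?Y = S" using topspace_dtop[OF g2] by simp
  have ch: "continuous_map ?t1 ?Y h" and ck: "continuous_map ?Y ?t1 k"
    and kh: "\<And>x. k (h x) = x" and hk: "\<And>y. y \<in> S \<Longrightarrow> h (k y) = y"
    using hm unfolding homeomorphic_maps_def topspace_dtop[OF g1] tY by auto
  have hS: "h x \<in> S" for x using continuous_map_image_subset_topspace[OF ch] tY topspace_dtop[OF g1] by auto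
  have inj: "inj h" by (metis injI kh)
  have rng: "range h = S"
  proof
    show "range h \<subseteq> S" using hS by blast
    show "S \<subseteq> range h"
    proof
      fix y assume "y \<in> S" then have "y = h (k y)" using hk by simp
      then show "y \<in> range h" by blast
    qed
  qed
  have ch2: "continuous_map ?t1 ?t2 h" using ch continuous_map_in_subtopology by blast
  have che: "continuous_map ?t1 euclidean h"
    using continuous_map_compose[OF ch2 continuous_map_id_dtop[OF g2]] by (simp add: o_def id_def)
  have conn: "connected (h ` I)" if "connected I" for I
  proof -
    have "connectedin euclidean (h ` I)"
      by (rule connectedin_continuous_map_image[OF che connectedin_dtop[OF g1 that]])
    then show ?thesis by simp
  qed
  have mono: "(\<forall>x y. x < y \<longrightarrow> h x < h y) \<or> (\<forall>x y. x < y \<longrightarrow> h y < h x)"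
  proof (rule darboux_mono[OF inj])
    show "connected (h ` {a..b})" for a b by (rule conn) (rule connected_Icc)
  qed
  have connr: "connected (range h)" using conn[of UNIV] by simp
  have cont: "continuous_on UNIV h" using mono_cont[OF mono connr] .
  have openS: "open S" using open_range_mono[OF mono connr] rng by simp
  have Sopen2: "openin ?t2 S" using open_dtop[OF g2 openS] .
  have A: "h ` N \<in> nbhds ?t2 (h x)" if NN: "N \<in> nbhds ?t1 x" for N x
  proof -
    obtain U where U: "openin ?t1 U" "x \<in> U" "U \<subseteq> N" using NN by (rule nbhdsE)
    have eq: "h ` U = {y \<in> topspace ?Y. k y \<in> U}"
    proof (rule set_eqI)
      fix y
      show "y \<in> h ` U \<longleftrightarrow> y \<in> {y \<in> topspace ?Y. k y \<in> U}"
      proof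
        assume "y \<in> h ` U"
        then obtain u where "u \<in> U" "y = h u" by (rule imageE)
        then show "y \<in> {y \<in> topspace ?Y. k y \<in> U}" unfolding tY using hS kh by simp
      next
        assume "y \<in> {y \<in> topspace ?Y. k y \<in> U}"
        then have "y \<in> S" "k y \<in> U" unfolding tY by simp_all
        then have "h (k y) \<in> h ` U" by (rule_tac imageI)
        then show "y \<in> h ` U" using hk[OF \<open>y \<in> S\<close>] by simp
      qed
    qed
    have "openin ?Y {y \<in> topspace ?Y. k y \<in> U}" using ck U(1) unfolding continuous_map by (elim conjE) (rule allE, assumption, erule impE, assumption, assumption)
    then have "openin ?Y (h ` U)" unfolding eq .
    then obtain T where T: "openin ?t2 T" "h ` U = T \<inter> S" unfolding openin_subtopology by (elim exE conjE)
    have "openin ?t2 (h ` U)" unfolding T(2) using T(1) Sopen2 by (rule openin_Int)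
    moreover have "h x \<in> h ` U" using U(2) by (rule imageI)
    moreover have "h ` U \<subseteq> h ` N" using U(3) by (rule image_mono)
    ultimately show ?thesis by (rule nbhdsI)
  qed
  have B: "h -` M \<in> nbhds ?t1 x" if NN: "M \<in> nbhds ?t2 (h x)" for M x
  proof -
    obtain V where V: "openin ?t2 V" "h x \<in> V" "V \<subseteq> M" using NN by (rule nbhdsE)
    have "openin ?Y (V \<inter> S)" using V(1) by (simp add: openin_subtopology_Int)
    then have "openin ?t1 {u \<in> topspace ?t1. h u \<in> V \<inter> S}" using ch unfolding continuous_map by blast
    moreover have "{u \<in> topspace ?t1. h u \<in> V \<inter> S} = h -` V" using hS topspace_dtop[OF g1] by auto
    ultimately have "openin ?t1 (h -` V)" by simp
    moreover have "x \<in> h -` V" "h -` V \<subseteq> h -` M" using V by auto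
    ultimately show ?thesis by (rule nbhdsI)
  qed
  show ?thesis using mono
  proof
    assume incr: "\<forall>x y. x < y \<longrightarrow> h x < h y"
    have "(RT ?t1 x \<longleftrightarrow> RT ?t2 (h x)) \<and> (LT ?t1 x \<longleftrightarrow> LT ?t2 (h x))" for x
    proof
      show "RT ?t1 x \<longleftrightarrow> RT ?t2 (h x)" unfolding RT_def
      proof (rule side_transfer[OF inj A B])
        fix d :: real assume d: "d > 0"
        obtain \<delta> where "\<delta> > 0" "\<forall>y. \<bar>y - x\<bar> < \<delta> \<longrightarrow> \<bar>h y - h x\<bar> < d" using cont_small[OF cont d] by blast
        moreover have "h ` {x<..<x + \<delta>} \<subseteq> {h x<..<h x + d}"
        proof
          fix v assume "v \<in> h ` {x<..<x + \<delta>}"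
          then obtain y where y: "x < y" "y < x + \<delta>" "v = h y" by auto
          have "\<bar>y - x\<bar> < \<delta>" using y by linarith
          then have "\<bar>h y - h x\<bar> < d" using calculation by blast
          moreover have "h x < h y" using incr y by auto
          ultimately show "v \<in> {h x<..<h x + d}" using y by auto
        qed
        ultimately show "\<exists>\<delta>>0. h ` {x<..<x + \<delta>} \<subseteq> {h x<..<h x + d}" by blast
      next
        fix d :: real assume d: "d > 0"
        have "h ` {x<..<x + d} = {h x<..<h (x + d)}" using image_incr[OF incr cont] d by simp
        moreover have "h (x + d) - h x > 0" using incr d by simp
        ultimately show "\<exists>\<delta>>0. {h x<..<h x + \<delta>} \<subseteq> h ` {x<..<x + d}"
          by (intro exI[of _ "h (x + d) - h x"]) auto
      qed
      show "LT ?t1 x \<longleftrightarrow> LT ?t2 (h x)" unfolding LT_def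
      proof (rule side_transfer[OF inj A B])
        fix d :: real assume d: "d > 0"
        obtain \<delta> where "\<delta> > 0" "\<forall>y. \<bar>y - x\<bar> < \<delta> \<longrightarrow> \<bar>h y - h x\<bar> < d" using cont_small[OF cont d] by blast
        moreover have "h ` {x - \<delta><..<x} \<subseteq> {h x - d<..<h x}"
        proof
          fix v assume "v \<in> h ` {x - \<delta><..<x}"
          then obtain y where y: "x - \<delta> < y" "y < x" "v = h y" by auto
          have "\<bar>y - x\<bar> < \<delta>" using y by linarith
          then have "\<bar>h y - h x\<bar> < d" using calculation by blast
          moreover have "h y < h x" using incr y by auto
          ultimately show "v \<in> {h x - d<..<h x}" using y by auto
        qed
        ultimately show "\<exists>\<delta>>0. h ` {x - \<delta><..<x} \<subseteq> {h x - d<..<h x}" by blast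
      next
        fix d :: real assume d: "d > 0"
        have "h ` {x - d<..<x} = {h (x - d)<..<h x}" using image_incr[OF incr cont] d by simp
        moreover have "h x - h (x - d) > 0" using incr d by simp
        ultimately show "\<exists>\<delta>>0. {h x - \<delta><..<h x} \<subseteq> h ` {x - d<..<x}"
          by (intro exI[of _ "h x - h (x - d)"]) auto
      qed
    qed
    then show ?thesis using inj rng cont incr by blast
  next
    assume decr: "\<forall>x y. x < y \<longrightarrow> h y < h x"
    have "(RT ?t1 x \<longleftrightarrow> LT ?t2 (h x)) \<and> (LT ?t1 x \<longleftrightarrow> RT ?t2 (h x))" for x
    proof
      show "RT ?t1 x \<longleftrightarrow> LT ?t2 (h x)" unfolding RT_def LT_def
      proof (rule side_transfer[OF inj A B])
        fix d :: real assume d: "d > 0"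
        obtain \<delta> where "\<delta> > 0" "\<forall>y. \<bar>y - x\<bar> < \<delta> \<longrightarrow> \<bar>h y - h x\<bar> < d" using cont_small[OF cont d] by blast
        moreover have "h ` {x<..<x + \<delta>} \<subseteq> {h x - d<..<h x}"
        proof
          fix v assume "v \<in> h ` {x<..<x + \<delta>}"
          then obtain y where y: "x < y" "y < x + \<delta>" "v = h y" by auto
          have "\<bar>y - x\<bar> < \<delta>" using y by linarith
          then have "\<bar>h y - h x\<bar> < d" using calculation by blast
          moreover have "h y < h x" using decr y by auto
          ultimately show "v \<in> {h x - d<..<h x}" using y by auto
        qed
        ultimately show "\<exists>\<delta>>0. h ` {x<..<x + \<delta>} \<subseteq> {h x - d<..<h x}" by blast
      next
        fix d :: real assume d: "d > 0"
        have "h ` {x<..<x + d} = {h (x + d)<..<h x}" using image_decr[OF decr cont] d by simp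
        moreover have "h x - h (x + d) > 0" using decr d by simp
        ultimately show "\<exists>\<delta>>0. {h x - \<delta><..<h x} \<subseteq> h ` {x<..<x + d}"
          by (intro exI[of _ "h x - h (x + d)"]) auto
      qed
      show "LT ?t1 x \<longleftrightarrow> RT ?t2 (h x)" unfolding RT_def LT_def
      proof (rule side_transfer[OF inj A B])
        fix d :: real assume d: "d > 0"
        obtain \<delta> where "\<delta> > 0" "\<forall>y. \<bar>y - x\<bar> < \<delta> \<longrightarrow> \<bar>h y - h x\<bar> < d" using cont_small[OF cont d] by blast
        moreover have "h ` {x - \<delta><..<x} \<subseteq> {h x<..<h x + d}"
        proof
          fix v assume "v \<in> h ` {x - \<delta><..<x}"
          then obtain y where y: "x - \<delta> < y" "y < x" "v = h y" by auto
          have "\<bar>y - x\<bar> < \<delta>" using y by linarith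
          then have "\<bar>h y - h x\<bar> < d" using calculation by blast
          moreover have "h x < h y" using decr y by auto
          ultimately show "v \<in> {h x<..<h x + d}" using y by auto
        qed
        ultimately show "\<exists>\<delta>>0. h ` {x - \<delta><..<x} \<subseteq> {h x<..<h x + d}" by blast
      next
        fix d :: real assume d: "d > 0"
        have "h ` {x - d<..<x} = {h x<..<h (x - d)}" using image_decr[OF decr cont] d by simp
        moreover have "h (x - d) - h x > 0" using decr d by simp
        ultimately show "\<exists>\<delta>>0. {h x<..<h x + \<delta>} \<subseteq> h ` {x - d<..<x}"
          by (intro exI[of _ "h (x - d) - h x"]) auto
      qed
    qed
    then show ?thesis using inj rng cont decr by blast
  qed
qed


unbundle cardinal_syntax

lemma diag:
  fixes F :: "('a \<Rightarrow> 'a) set" and M :: "('a \<Rightarrow> 'a) \<Rightarrow> 'a set" and pol :: "('a \<Rightarrow> 'a) \<Rightarrow> bool"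
  assumes inf: "infinite (UNIV::'a set)"
    and card: "|F| \<le>o |UNIV::'a set|"
    and big: "\<And>f. f \<in> F \<Longrightarrow> |UNIV::'a set| \<le>o |M f|"
    and injM: "\<And>f. f \<in> F \<Longrightarrow> inj_on f (M f)"
    and mv: "\<And>f x. f \<in> F \<Longrightarrow> x \<in> M f \<Longrightarrow> f x \<noteq> x"
  shows "\<exists>B. \<forall>f\<in>F. \<exists>x\<in>M f. (x \<in> B) = ((f x \<in> B) = pol f)"
proof -
  define r where "r = |F|"
  have Cr: "Card_order r" unfolding r_def by (rule card_of_Card_order)
  have Wr: "Well_order r" unfolding r_def by (rule card_of_Well_order)
  have Fr: "Field r = F" unfolding r_def by (rule Field_card_of)
  have small_under: "|underS r f| <o |UNIV::'a set|" if "f \<in> F" for f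
  proof -
    have "|underS r f| <o r" using card_of_underS[OF Cr] that Fr by simp
    then show ?thesis using card unfolding r_def using ordLess_ordLeq_trans by blast
  qed
  define Z where "Z g f = g ` underS r f \<union> (\<lambda>j. j (g j)) ` underS r f" for g :: "('a \<Rightarrow> 'a) \<Rightarrow> 'a" and f
  have smallZ: "|Z g f| <o |UNIV::'a set|" if "f \<in> F" for g f
  proof -
    have "|g ` underS r f| <o |UNIV::'a set|"
      using card_of_image ordLeq_ordLess_trans small_under[OF that] by blast
    moreover have "|(\<lambda>j. j (g j)) ` underS r f| <o |UNIV::'a set|"
      using card_of_image ordLeq_ordLess_trans small_under[OF that] by blast
    ultimately show ?thesis unfolding Z_def using card_of_Un_ordLess_infinite[OF inf] by blast
  qed
  have ex: "\<exists>x. x \<in> M f \<and> x \<notin> Z g f \<and> f x \<notin> Z g f" if f: "f \<in> F" for g f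
  proof (rule ccontr)
    assume "\<not> ?thesis"
    then have sub: "M f \<subseteq> Z g f \<union> (M f \<inter> f -` Z g f)" by blast
    have "|M f \<inter> f -` Z g f| \<le>o |Z g f|"
      unfolding card_of_ordLeq[symmetric]
      by (intro exI[of _ f] conjI inj_on_subset[OF injM[OF f]]) auto
    then have "|M f \<inter> f -` Z g f| <o |UNIV::'a set|" using smallZ[OF f] ordLeq_ordLess_trans by blast
    then have "|Z g f \<union> (M f \<inter> f -` Z g f)| <o |UNIV::'a set|"
      using card_of_Un_ordLess_infinite[OF inf smallZ[OF f]] by blast
    then have "|M f| <o |UNIV::'a set|" using card_of_mono1[OF sub] ordLeq_ordLess_trans by blast
    then show False using big[OF f] not_ordLess_ordLeq by blast
  qed
  define H where "H g f = (SOME x. x \<in> M f \<and> x \<notin> Z g f \<and> f x \<notin> Z g f)" for g f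
  define R where "R = r - Id"
  have wfR: "wf R" unfolding R_def using Wr wo_rel.WF wo_rel_def by blast
  define xx where "xx = wfrec R H"
  have cutZ: "Z (cut xx R f) f = Z xx f" for f
  proof -
    have "\<And>j. j \<in> underS r f \<Longrightarrow> cut xx R f j = xx j"
      unfolding underS_def R_def cut_def by auto
    then show ?thesis unfolding Z_def by (auto simp: image_def)
  qed
  have xx_eq: "xx f = H xx f" for f
    unfolding xx_def using wfrec[OF wfR, of H f] cutZ[unfolded xx_def] unfolding H_def by simp
  have xxp: "xx f \<in> M f \<and> xx f \<notin> Z xx f \<and> f (xx f) \<notin> Z xx f" if "f \<in> F" for f
    unfolding xx_eq[of f] H_def using someI_ex[OF ex[OF that]] .
  define B where "B = xx ` F \<union> {j (xx j) | j. j \<in> F \<and> pol j}"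
  have tot: "(j, f) \<in> r \<or> (f, j) \<in> r" if "j \<in> F" "f \<in> F" for j f
    using wo_rel.TOTALS[of r] Wr Fr that unfolding wo_rel_def by blast
  have under: "j \<in> underS r f" if "(j, f) \<in> r" "j \<noteq> f" for j f
    using that unfolding underS_def by auto
  show ?thesis
  proof (intro exI[of _ B] ballI bexI[of _ "xx f" for f])
    fix f assume f: "f \<in> F"
    show "xx f \<in> M f" using xxp[OF f] by blast
    have in1: "xx f \<in> B" unfolding B_def using f by blast
    have "(f (xx f) \<in> B) = pol f"
    proof
      assume "f (xx f) \<in> B"
      then consider (a) j where "j \<in> F" "f (xx f) = xx j" | (b) j where "j \<in> F" "pol j" "f (xx f) = j (xx j)"
        unfolding B_def by blast
      then show "pol f"
      proof cases
        case a
        show ?thesis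
        proof (cases "j = f")
          case True then show ?thesis using a mv[OF f] xxp[OF f] by auto
        next
          case False
          from tot[OF a(1) f] show ?thesis
          proof
            assume "(j, f) \<in> r"
            then have "xx j \<in> Z xx f" using under[OF _ False] unfolding Z_def by blast
            then show ?thesis using xxp[OF f] a by simp
          next
            assume "(f, j) \<in> r"
            then have "f (xx f) \<in> Z xx j" using under[of f j] False unfolding Z_def by (simp add: image_def) blast
            then show ?thesis using xxp[OF a(1)] a by simp
          qed
        qed
      next
        case b
        show ?thesis
        proof (cases "j = f")
          case True then show ?thesis using b by simp
        next
          case False
          from tot[OF b(1) f] show ?thesis
          proof
            assume "(j, f) \<in> r"
            then have "j (xx j) \<in> Z xx f" using under[OF _ False] unfolding Z_def by blast
            then show ?thesis using xxp[OF f] b by simp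
          next
            assume "(f, j) \<in> r"
            then have "f (xx f) \<in> Z xx j" using under[of f j] False unfolding Z_def by (simp add: image_def) blast
            then show ?thesis using xxp[OF b(1)] b by simp
          qed
        qed
      qed
    next
      assume "pol f"
      then show "f (xx f) \<in> B" unfolding B_def using f by blast
    qed
    then show "(xx f \<in> B) = ((f (xx f) \<in> B) = pol f)" using in1 by simp
  qed
qed


unbundle cardinal_syntax

definition rseq :: "real \<Rightarrow> nat \<Rightarrow> bool" where
  "rseq x n = (of_rat (from_nat n) < x)"

lemma inj_rseq: "inj rseq"
proof (rule injI)
  fix x y assume eq: "rseq x = rseq y"
  show "x = y"
  proof (rule ccontr)
    assume "x \<noteq> y"
    then consider "x < y" | "y < x" by linarith
    then show False
    proof cases
      case 1
      then obtain r where "r \<in> \<rat>" "x < r" "r < y" using Rats_dense_in_real by blast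
      then obtain q where q: "r = of_rat q" by (auto elim: Rats_cases)
      have "rseq x (to_nat q) \<noteq> rseq y (to_nat q)" unfolding rseq_def using q \<open>x < r\<close> \<open>r < y\<close> by simp
      then show False using eq by simp
    next
      case 2
      then obtain r where "r \<in> \<rat>" "y < r" "r < x" using Rats_dense_in_real by blast
      then obtain q where q: "r = of_rat q" by (auto elim: Rats_cases)
      have "rseq x (to_nat q) \<noteq> rseq y (to_nat q)" unfolding rseq_def using q \<open>y < r\<close> \<open>r < x\<close> by simp
      then show False using eq by simp
    qed
  qed
qed

definition fseq :: "(nat \<Rightarrow> real) \<Rightarrow> nat \<Rightarrow> bool" where
  "fseq s p = rseq (s (fst (prod_decode p))) (snd (prod_decode p))"

lemma inj_fseq: "inj fseq"
proof (rule injI)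
  fix s t assume eq: "fseq s = fseq t"
  have "rseq (s i) = rseq (t i)" for i
  proof
    fix m
    have "fseq s (prod_encode (i, m)) = fseq t (prod_encode (i, m))" using eq by simp
    then show "rseq (s i) m = rseq (t i) m" unfolding fseq_def by simp
  qed
  then have "s i = t i" for i using inj_rseq by (simp add: inj_eq)
  then show "s = t" by blast
qed

lemma card_funreal: "|UNIV::(nat \<Rightarrow> real) set| \<le>o |UNIV::real set|"
  unfolding card_of_ordLeq[symmetric]
  by (intro exI[of _ "cg \<circ> fseq"] conjI inj_compose[OF cg_inj inj_fseq]) auto

lemma cont_eq_rat:
  fixes f g :: "real \<Rightarrow> real"
  assumes "continuous_on UNIV f" "continuous_on UNIV g" "\<And>q. f (of_rat q) = g (of_rat q)"
  shows "f = g"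
proof
  fix x
  show "f x = g x"
  proof (rule ccontr)
    assume ne: "f x \<noteq> g x"
    have "continuous_on UNIV (\<lambda>y. f y - g y)" using assms by (intro continuous_intros)
    then have "isCont (\<lambda>y. f y - g y) x" using continuous_on_eq_continuous_at by blast
    then obtain d where d: "d > 0" "\<forall>y. dist y x < d \<longrightarrow> dist (f y - g y) (f x - g x) < \<bar>f x - g x\<bar>"
    proof -
      have "\<bar>f x - g x\<bar> > 0" using ne by simp
      then show ?thesis using that \<open>isCont (\<lambda>y. f y - g y) x\<close> unfolding continuous_at_eps_delta by blast
    qed
    obtain r where "r \<in> \<rat>" "x < r" "r < x + d" using Rats_dense_in_real[of x "x + d"] d(1) by auto
    then obtain q where q: "r = of_rat q" by (auto elim: Rats_cases)
    have "dist r x < d" using \<open>x < r\<close> \<open>r < x + d\<close> by (simp add: dist_real_def)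
    then have "dist (f r - g r) (f x - g x) < \<bar>f x - g x\<bar>" using d(2) by blast
    moreover have "f r - g r = 0" using assms(3) q by simp
    ultimately show False by (simp add: dist_real_def)
  qed
qed

lemma card_cont: "|{f::real \<Rightarrow> real. continuous_on UNIV f} \<inter> A| \<le>o |UNIV::real set|"
proof -
  have "|{f::real \<Rightarrow> real. continuous_on UNIV f} \<inter> A| \<le>o |UNIV::(nat \<Rightarrow> real) set|"
    unfolding card_of_ordLeq[symmetric]
  proof (intro exI[of _ "\<lambda>f n. f (of_rat (from_nat n))"] conjI)
    show "inj_on (\<lambda>f n. f (of_rat (from_nat n))) ({f::real \<Rightarrow> real. continuous_on UNIV f} \<inter> A)"
    proof (rule inj_onI)
      fix f g assume f: "f \<in> {f::real \<Rightarrow> real. continuous_on UNIV f} \<inter> A" and g: "g \<in> {f::real \<Rightarrow> real. continuous_on UNIV f} \<inter> A"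
        and eq: "(\<lambda>n. f (of_rat (from_nat n))) = (\<lambda>n. g (of_rat (from_nat n)))"
      have "f (of_rat q) = g (of_rat q)" for q
      proof -
        have "f (of_rat (from_nat (to_nat q))) = g (of_rat (from_nat (to_nat q)))" using eq by metis
        then show ?thesis by simp
      qed
      then show "f = g" using cont_eq_rat f g by blast
    qed
  qed auto
  then show ?thesis using card_funreal ordLeq_transitive by blast
qed

lemma card_ball: assumes "r > 0" "ball (y::real) r \<subseteq> M" shows "|UNIV::real set| \<le>o |M|"
proof -
  obtain f g where hm: "homeomorphism (ball y r) (UNIV::real set) f g"
    using homeomorphic_ball_UNIV[OF assms(1), of y] unfolding homeomorphic_def by blast
  then have "inj g" "g ` UNIV \<subseteq> ball y r" unfolding homeomorphism_def by (metis UNIV_I injI, blast)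
  then have "|UNIV::real set| \<le>o |ball y r|" unfolding card_of_ordLeq[symmetric] by blast
  then show ?thesis using card_of_mono1[OF assms(2)] ordLeq_transitive by blast
qed


lemma avoid: assumes "open U" "U \<noteq> {}" shows "\<exists>z\<in>U. z \<notin> KK \<and> z \<notin> DD"
proof -
  have "\<not> U \<subseteq> KK"
  proof
    assume "U \<subseteq> KK"
    then have "U \<subseteq> interior KK" using assms(1) interior_maximal by blast
    then show False using interior_KK assms(2) by blast
  qed
  then obtain y where y: "y \<in> U" "y \<notin> KK" by blast
  have "open (U - KK)" using assms(1) closed_KK by (rule open_Diff)
  then obtain r where r: "r > 0" "ball y r \<subseteq> U - KK" using y open_contains_ball by blast
  have sub: "{y<..<y+r} \<subseteq> ball y r" by (auto simp: dist_real_def)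
  have "uncountable {y<..<y+r}" using r(1) uncountable_open_interval by simp
  then have "\<not> {y<..<y+r} \<subseteq> DD" using countable_DD countable_subset by blast
  then obtain z where "z \<in> {y<..<y+r}" "z \<notin> DD" by blast
  then show ?thesis using sub r(2) by blast
qed

lemma finite_no_rac: assumes "finite F" shows "\<not> rac F y"
proof
  assume R: "rac F y"
  define G where "G = (\<lambda>c. c - y) ` (F \<inter> {y<..})"
  have fG: "finite G" unfolding G_def using assms by simp
  show False
  proof (cases "G = {}")
    case True
    obtain c where "c \<in> F" "y < c" "c < y + 1" using R unfolding rac_def by (meson zero_less_one)
    then have "c - y \<in> G" unfolding G_def by blast
    then show False using True by blast
  next
    case False
    have "Min G > 0" using Min_gr_iff[OF fG False] unfolding G_def by auto
    then obtain c where c: "c \<in> F" "y < c" "c < y + Min G" using R unfolding rac_def by blast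
    then have "c - y \<in> G" unfolding G_def by blast
    then have "Min G \<le> c - y" using Min_le[OF fG] by blast
    then show False using c by linarith
  qed
qed

lemma finite_no_lac: assumes "finite F" shows "\<not> lac F y"
proof
  assume R: "lac F y"
  define G where "G = (\<lambda>c. y - c) ` (F \<inter> {..<y})"
  have fG: "finite G" unfolding G_def using assms by simp
  show False
  proof (cases "G = {}")
    case True
    obtain c where "c \<in> F" "y - 1 < c" "c < y" using R unfolding lac_def by (meson zero_less_one)
    then have "y - c \<in> G" unfolding G_def by blast
    then show False using True by blast
  next
    case False
    have "Min G > 0" using Min_gr_iff[OF fG False] unfolding G_def by auto
    then obtain c where c: "c \<in> F" "y - Min G < c" "c < y" using R unfolding lac_def by blast
    then have "y - c \<in> G" unfolding G_def by blast
    then have "Min G \<le> y - c" using Min_le[OF fG] by blast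
    then show False using c by linarith
  qed
qed

lemma rac_local: assumes "rac C y" "d0 > 0" "C \<inter> {y<..<y+d0} \<subseteq> F" shows "rac F y"
  unfolding rac_def
proof (intro allI impI)
  fix d :: real assume "d > 0"
  then have "min d d0 > 0" using assms(2) by simp
  then obtain c where "c \<in> C" "y < c" "c < y + min d d0" using assms(1) unfolding rac_def by blast
  then show "\<exists>c\<in>F. y < c \<and> c < y + d" using assms(3) by (intro bexI[of _ c]) auto
qed

lemma lac_local: assumes "lac C y" "d0 > 0" "C \<inter> {y-d0<..<y} \<subseteq> F" shows "lac F y"
  unfolding lac_def
proof (intro allI impI)
  fix d :: real assume "d > 0"
  then have "min d d0 > 0" using assms(2) by simp
  then obtain c where "c \<in> C" "y - min d d0 < c" "c < y" using assms(1) unfolding lac_def by blast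
  then show "\<exists>c\<in>F. y - d < c \<and> c < y" using assms(3) by (intro bexI[of _ c]) auto
qed

lemma acc_right_only:
  assumes sub: "C \<subseteq> {x<..}" and fin: "\<And>\<epsilon>. \<epsilon> > 0 \<Longrightarrow> finite (C \<inter> {x+\<epsilon>..})"
  shows "\<not> lac C y" "y \<noteq> x \<Longrightarrow> \<not> rac C y"
proof -
  show "\<not> lac C y"
  proof
    assume L: "lac C y"
    show False
    proof (cases "y \<le> x")
      case True
      obtain c where "c \<in> C" "c < y" using L unfolding lac_def by (meson zero_less_one)
      then show False using sub True by auto
    next
      case False
      define \<epsilon> where "\<epsilon> = (y - x) / 2"
      have e: "\<epsilon> > 0" using False by (simp add: \<epsilon>_def)
      have eq: "y - \<epsilon> = x + \<epsilon>" by (simp add: \<epsilon>_def field_simps)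
      have "C \<inter> {y-\<epsilon><..<y} \<subseteq> C \<inter> {x+\<epsilon>..}" unfolding eq by auto
      then have "lac (C \<inter> {x+\<epsilon>..}) y" using lac_local[OF L e] by blast
      then show False using finite_no_lac[OF fin[OF e]] by blast
    qed
  qed
  assume "y \<noteq> x"
  show "\<not> rac C y"
  proof
    assume R: "rac C y"
    show False
    proof (cases "y < x")
      case True
      have "x - y > 0" using True by simp
      then obtain c where "c \<in> C" "c < y + (x - y)" using R unfolding rac_def by blast
      then show False using sub by auto
    next
      case False
      then have yx: "x < y" using \<open>y \<noteq> x\<close> by simp
      define \<epsilon> where "\<epsilon> = (y - x) / 2"
      have e: "\<epsilon> > 0" using yx by (simp add: \<epsilon>_def)
      have le: "x + \<epsilon> \<le> y" using yx by (simp add: \<epsilon>_def field_simps)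
      have "C \<inter> {y<..<y+1} \<subseteq> C \<inter> {x+\<epsilon>..}" using le by auto
      then have "rac (C \<inter> {x+\<epsilon>..}) y" using rac_local[OF R zero_less_one] by blast
      then show False using finite_no_rac[OF fin[OF e]] by blast
    qed
  qed
qed

lemma right_seq: "\<exists>R. R \<inter> KK = {} \<and> R \<inter> DD = {} \<and> rac R x \<and> (\<forall>y. y \<noteq> x \<longrightarrow> \<not> rac R y) \<and> (\<forall>y. \<not> lac R y)"
proof -
  have ex: "\<exists>z. z \<in> {x + 1/(real n+2)<..<x + 1/(real n+1)} \<and> z \<notin> KK \<and> z \<notin> DD" for n :: nat
  proof -
    have "1/(real n+2) < 1/(real n+1)" by (simp add: frac_less2)
    then have "{x + 1/(real n+2)<..<x + 1/(real n+1)} \<noteq> {}" by simp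
    then show ?thesis using avoid[of "{x + 1/(real n+2)<..<x + 1/(real n+1)}"] by auto
  qed
  define c where "c n = (SOME z. z \<in> {x + 1/(real n+2)<..<x + 1/(real n+1)} \<and> z \<notin> KK \<and> z \<notin> DD)" for n :: nat
  have c: "c n \<in> {x + 1/(real n+2)<..<x + 1/(real n+1)} \<and> c n \<notin> KK \<and> c n \<notin> DD" for n
    unfolding c_def by (rule someI_ex[OF ex])
  define R where "R = range c"
  have sub: "R \<subseteq> {x<..}"
  proof
    fix z assume "z \<in> R"
    then obtain n where "z = c n" unfolding R_def by blast
    moreover have "0 < 1/(real n+2)" by simp
    moreover have "x + 1/(real n+2) < c n" using c[of n] by simp
    ultimately have "x < c n" by linarith
    then show "z \<in> {x<..}" using \<open>z = c n\<close> by simp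
  qed
  have fin: "finite (R \<inter> {x+\<epsilon>..})" if e: "\<epsilon> > 0" for \<epsilon>
  proof -
    define N where "N = nat (ceiling (1/\<epsilon>))"
    have "R \<inter> {x+\<epsilon>..} \<subseteq> c ` {..<N}"
    proof
      fix z assume "z \<in> R \<inter> {x+\<epsilon>..}"
      then obtain n where n: "z = c n" "x + \<epsilon> \<le> c n" unfolding R_def by auto
      then have "\<epsilon> < 1/(real n+1)" using c[of n] by simp
      then have "\<epsilon> * (real n + 1) < 1" using e by (simp add: field_simps)
      then have "real n + 1 < 1/\<epsilon>" using e by (simp add: field_simps)
      then have "n < N" unfolding N_def by linarith
      then show "z \<in> c ` {..<N}" using n by blast
    qed
    then show ?thesis using finite_subset by blast
  qed
  have "rac R x" unfolding rac_def
  proof (intro allI impI)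
    fix d :: real assume d: "d > 0"
    obtain n :: nat where n: "1/d < real n" using reals_Archimedean2 by blast
    then have "1/(real n+1) < d" using d by (simp add: field_simps)
    moreover have "0 < 1/(real n+2)" by simp
    moreover have "x + 1/(real n+2) < c n" "c n < x + 1/(real n+1)" using c[of n] by simp_all
    ultimately have "x < c n" "c n < x + d" by linarith+
    then show "\<exists>c\<in>R. x < c \<and> c < x + d" unfolding R_def by blast
  qed
  moreover have "R \<inter> KK = {}" "R \<inter> DD = {}" using c unfolding R_def by auto
  ultimately show ?thesis using acc_right_only[OF sub fin] by blast
qed

lemma KK_neg: "- y \<in> KK \<longleftrightarrow> y \<in> KK"
proof -
  have *: "- y \<in> KK" if "y \<in> KK" for y
    unfolding KK_def
  proof (intro CollectI allI)
    fix n :: nat and k :: int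
    have "1/6 \<le> \<bar>3^n * y - of_int (- k - 1) - 1/2\<bar>" using that unfolding KK_def by blast
    moreover have "\<bar>3^n * y - of_int (- k - 1) - 1/2\<bar> = \<bar>3^n * (- y) - of_int k - 1/2\<bar>"
      by (simp add: abs_minus_commute[of _ "of_int k + 1/2" for k] algebra_simps)
    ultimately show "1/6 \<le> \<bar>3^n * (- y) - of_int k - 1/2\<bar>" by simp
  qed
  show ?thesis using *[of y] *[of "- y"] by auto
qed

lemma DD_neg: "- y \<in> DD \<longleftrightarrow> y \<in> DD"
proof -
  have *: "- y \<in> DD" if yD: "y \<in> DD" for y
  proof -
    obtain k :: int and n :: nat where y: "y = (of_int k + 1/2) / 3^n" using yD unfolding DD_def by blast
    have "- y = (of_int (- k - 1) + 1/2) / 3^n" unfolding y by (simp add: field_simps)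
    then show ?thesis unfolding DD_def by blast
  qed
  show ?thesis using *[of y] *[of "- y"] by auto
qed

lemma rac_neg: "rac (uminus ` C) y \<longleftrightarrow> lac C (- y)"
  unfolding rac_def lac_def
proof (intro iffI allI impI)
  fix d :: real assume H: "\<forall>d>0. \<exists>c\<in>uminus ` C. y < c \<and> c < y + d" and d: "d > 0"
  then obtain c where "c \<in> uminus ` C" "y < c" "c < y + d" by blast
  then show "\<exists>c\<in>C. - y - d < c \<and> c < - y" by (intro bexI[of _ "- c"]) auto
next
  fix d :: real assume H: "\<forall>d>0. \<exists>c\<in>C. - y - d < c \<and> c < - y" and d: "d > 0"
  then obtain c where "c \<in> C" "- y - d < c" "c < - y" by blast
  then show "\<exists>c\<in>uminus ` C. y < c \<and> c < y + d" by (intro bexI[of _ "- c"]) auto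
qed

lemma lac_neg: "lac (uminus ` C) y \<longleftrightarrow> rac C (- y)"
  unfolding rac_def lac_def
proof (intro iffI allI impI)
  fix d :: real assume H: "\<forall>d>0. \<exists>c\<in>uminus ` C. y - d < c \<and> c < y" and d: "d > 0"
  then obtain c where "c \<in> uminus ` C" "y - d < c" "c < y" by blast
  then show "\<exists>c\<in>C. - y < c \<and> c < - y + d" by (intro bexI[of _ "- c"]) auto
next
  fix d :: real assume H: "\<forall>d>0. \<exists>c\<in>C. - y < c \<and> c < - y + d" and d: "d > 0"
  then obtain c where "c \<in> C" "- y < c" "c < - y + d" by blast
  then show "\<exists>c\<in>uminus ` C. y - d < c \<and> c < y" by (intro bexI[of _ "- c"]) auto
qed

lemma left_seq: "\<exists>L. L \<inter> KK = {} \<and> L \<inter> DD = {} \<and> lac L x \<and> (\<forall>y. y \<noteq> x \<longrightarrow> \<not> lac L y) \<and> (\<forall>y. \<not> rac L y)"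
proof -
  obtain R where R: "R \<inter> KK = {}" "R \<inter> DD = {}" "rac R (- x)" "\<forall>y. y \<noteq> - x \<longrightarrow> \<not> rac R y" "\<forall>y. \<not> lac R y"
    using right_seq[of "- x"] by blast
  define L where "L = uminus ` R"
  have "L \<inter> KK = {}" using R(1) KK_neg unfolding L_def by auto
  moreover have "L \<inter> DD = {}" using R(2) DD_neg unfolding L_def by auto
  moreover have "lac L x" unfolding L_def lac_neg using R(3) .
  moreover have "\<not> lac L y" if "y \<noteq> x" for y unfolding L_def lac_neg using R(4) that by auto
  moreover have "\<not> rac L y" for y unfolding L_def rac_neg using R(5) by auto
  ultimately show ?thesis by blast
qed


unbundle cardinal_syntax

definition CI :: "real set \<Rightarrow> real set set \<Rightarrow> real set set" where
  "CI B \<J> = {C. C \<inter> DD = {} \<and> C \<inter> KK \<in> \<J> \<and> (\<forall>z. z \<notin> KK \<longrightarrow> (z \<in> B \<longrightarrow> \<not> lac C z) \<and> (z \<notin> B \<longrightarrow> \<not> rac C z))}"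

definition idl :: "real set set \<Rightarrow> bool" where
  "idl \<J> \<longleftrightarrow> {} \<in> \<J> \<and> (\<forall>A\<in>\<J>. \<forall>B\<in>\<J>. A \<union> B \<in> \<J>) \<and> (\<forall>A\<in>\<J>. \<forall>B. B \<subseteq> A \<longrightarrow> B \<in> \<J>)"

lemma rac_mono: "A \<subseteq> B \<Longrightarrow> rac A z \<Longrightarrow> rac B z"
  unfolding rac_def by blast
lemma lac_mono: "A \<subseteq> B \<Longrightarrow> lac A z \<Longrightarrow> lac B z"
  unfolding lac_def by blast

lemma rac_Un: "rac (A \<union> B) z \<longleftrightarrow> rac A z \<or> rac B z"
proof
  assume R: "rac (A \<union> B) z"
  show "rac A z \<or> rac B z"
  proof (rule ccontr)
    assume "\<not> (rac A z \<or> rac B z)"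
    then obtain d1 d2 where d: "d1 > 0" "\<forall>c\<in>A. \<not> (z < c \<and> c < z + d1)" "d2 > 0" "\<forall>c\<in>B. \<not> (z < c \<and> c < z + d2)"
      unfolding rac_def by blast
    have "min d1 d2 > 0" using d by simp
    then obtain c where "c \<in> A \<union> B" "z < c" "c < z + min d1 d2" using R unfolding rac_def by blast
    then show False using d by auto
  qed
next
  assume "rac A z \<or> rac B z" then show "rac (A \<union> B) z" using rac_mono by blast
qed

lemma lac_Un: "lac (A \<union> B) z \<longleftrightarrow> lac A z \<or> lac B z"
proof
  assume R: "lac (A \<union> B) z"
  show "lac A z \<or> lac B z"
  proof (rule ccontr)
    assume "\<not> (lac A z \<or> lac B z)"
    then obtain d1 d2 where d: "d1 > 0" "\<forall>c\<in>A. \<not> (z - d1 < c \<and> c < z)" "d2 > 0" "\<forall>c\<in>B. \<not> (z - d2 < c \<and> c < z)"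
      unfolding lac_def by blast
    have "min d1 d2 > 0" using d by simp
    then obtain c where "c \<in> A \<union> B" "z - min d1 d2 < c" "c < z" using R unfolding lac_def by blast
    then show False using d by auto
  qed
next
  assume "lac A z \<or> lac B z" then show "lac (A \<union> B) z" using lac_mono by blast
qed

lemma goodI_CI: assumes "idl \<J>" shows "goodI (CI B \<J>)"
  unfolding goodI_def
proof (intro conjI ballI allI impI)
  show "{} \<in> CI B \<J>" using assms unfolding CI_def idl_def rac_def lac_def by (auto intro!: exI[of _ "1::real"])
next
  fix A C assume A: "A \<in> CI B \<J>" and C: "C \<in> CI B \<J>"
  have "(A \<union> C) \<inter> KK = A \<inter> KK \<union> C \<inter> KK" by blast
  then have "(A \<union> C) \<inter> KK \<in> \<J>" using A C assms unfolding CI_def idl_def by auto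
  moreover have "(A \<union> C) \<inter> DD = {}" using A C unfolding CI_def by blast
  moreover have "\<forall>z. z \<notin> KK \<longrightarrow> (z \<in> B \<longrightarrow> \<not> lac (A \<union> C) z) \<and> (z \<notin> B \<longrightarrow> \<not> rac (A \<union> C) z)"
    using A C unfolding CI_def rac_Un lac_Un by blast
  ultimately show "A \<union> C \<in> CI B \<J>" unfolding CI_def by blast
next
  fix A C assume A: "A \<in> CI B \<J>" and sub: "C \<subseteq> A"
  have "C \<inter> KK \<subseteq> A \<inter> KK" using sub by blast
  then have "C \<inter> KK \<in> \<J>" using A assms unfolding CI_def idl_def by blast
  moreover have "C \<inter> DD = {}" using A sub unfolding CI_def by blast
  moreover have "\<forall>z. z \<notin> KK \<longrightarrow> (z \<in> B \<longrightarrow> \<not> lac C z) \<and> (z \<notin> B \<longrightarrow> \<not> rac C z)"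
    using A sub rac_mono lac_mono unfolding CI_def by blast
  ultimately show "C \<in> CI B \<J>" unfolding CI_def by blast
next
  fix A assume "A \<in> CI B \<J>" then show "A \<inter> DD = {}" unfolding CI_def by blast
qed

lemma R_in_CI:
  assumes "idl \<J>" "R \<inter> KK = {}" "R \<inter> DD = {}" "\<forall>y. y \<noteq> x \<longrightarrow> \<not> rac R y" "\<forall>y. \<not> lac R y" "x \<in> KK \<or> x \<in> B"
  shows "R \<in> CI B \<J>"
  using assms unfolding CI_def idl_def by auto

lemma L_in_CI:
  assumes "idl \<J>" "L \<inter> KK = {}" "L \<inter> DD = {}" "\<forall>y. y \<noteq> x \<longrightarrow> \<not> lac L y" "\<forall>y. \<not> rac L y" "x \<in> KK \<or> x \<notin> B"
  shows "L \<in> CI B \<J>"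
  using assms unfolding CI_def idl_def by auto

lemma gamma_cond: assumes "idl \<J>" shows "\<exists>C\<in>CI B \<J>. rac C x \<or> lac C x"
proof (cases "x \<in> KK \<or> x \<in> B")
  case True
  obtain R where R: "R \<inter> KK = {}" "R \<inter> DD = {}" "rac R x" "\<forall>y. y \<noteq> x \<longrightarrow> \<not> rac R y" "\<forall>y. \<not> lac R y"
    using right_seq[of x] by blast
  then show ?thesis using R_in_CI[OF assms R(1,2,4,5) True] by blast
next
  case False
  then have F: "x \<in> KK \<or> x \<notin> B" by blast
  obtain L where L: "L \<inter> KK = {}" "L \<inter> DD = {}" "lac L x" "\<forall>y. y \<noteq> x \<longrightarrow> \<not> lac L y" "\<forall>y. \<not> rac L y"
    using left_seq[of x] by blast
  then show ?thesis using L_in_CI[OF assms L(1,2,4,5) F] by blast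
qed

lemma types:
  assumes "idl \<J>"
  shows "x \<in> KK \<Longrightarrow> RT (dtop (CI B \<J>)) x \<and> LT (dtop (CI B \<J>)) x"
    and "x \<notin> KK \<Longrightarrow> RT (dtop (CI B \<J>)) x \<longleftrightarrow> x \<in> B"
    and "x \<notin> KK \<Longrightarrow> LT (dtop (CI B \<J>)) x \<longleftrightarrow> x \<notin> B"
proof -
  have g: "goodI (CI B \<J>)" using goodI_CI[OF assms] .
  obtain R where R: "R \<inter> KK = {}" "R \<inter> DD = {}" "rac R x" "\<forall>y. y \<noteq> x \<longrightarrow> \<not> rac R y" "\<forall>y. \<not> lac R y"
    using right_seq[of x] by blast
  obtain L where L: "L \<inter> KK = {}" "L \<inter> DD = {}" "lac L x" "\<forall>y. y \<noteq> x \<longrightarrow> \<not> lac L y" "\<forall>y. \<not> rac L y"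
    using left_seq[of x] by blast
  show "x \<in> KK \<Longrightarrow> RT (dtop (CI B \<J>)) x \<and> LT (dtop (CI B \<J>)) x"
    unfolding RT_dtop[OF g] LT_dtop[OF g]
    using R_in_CI[OF assms R(1,2,4,5)] L_in_CI[OF assms L(1,2,4,5)] R(3) L(3) by blast
  assume xK: "x \<notin> KK"
  show "RT (dtop (CI B \<J>)) x \<longleftrightarrow> x \<in> B"
    unfolding RT_dtop[OF g]
  proof
    assume "\<exists>C\<in>CI B \<J>. rac C x"
    then show "x \<in> B" using xK unfolding CI_def by blast
  next
    assume "x \<in> B"
    then show "\<exists>C\<in>CI B \<J>. rac C x" using R_in_CI[OF assms R(1,2,4,5)] R(3) by blast
  qed
  show "LT (dtop (CI B \<J>)) x \<longleftrightarrow> x \<notin> B"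
    unfolding LT_dtop[OF g]
  proof
    assume "\<exists>C\<in>CI B \<J>. lac C x"
    then show "x \<notin> B" using xK unfolding CI_def by blast
  next
    assume "x \<notin> B"
    then show "\<exists>C\<in>CI B \<J>. lac C x" using L_in_CI[OF assms L(1,2,4,5)] L(3) by blast
  qed
qed

definition FF :: "(real \<Rightarrow> real) set" where
  "FF = {f. continuous_on UNIV f \<and> inj f \<and> f \<noteq> id \<and> (\<forall>x. x \<notin> KK \<longrightarrow> f x \<notin> KK)}"
definition MM :: "(real \<Rightarrow> real) \<Rightarrow> real set" where
  "MM f = {x. x \<notin> KK \<and> f x \<noteq> x}"

lemma exB: "\<exists>B. \<forall>f\<in>FF. \<exists>x\<in>MM f. (x \<in> B) = ((f x \<in> B) = (\<not> f 0 < f 1))"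
proof (rule diag)
  show "infinite (UNIV :: real set)" by (rule infinite_UNIV_char_0)
  have FFeq: "FF = {f::real \<Rightarrow> real. continuous_on UNIV f} \<inter> {f. inj f \<and> f \<noteq> id \<and> (\<forall>x. x \<notin> KK \<longrightarrow> f x \<notin> KK)}"
    unfolding FF_def by blast
  show "|FF| \<le>o |UNIV::real set|" unfolding FFeq by (rule card_cont)
next
  fix f assume f: "f \<in> FF"
  then have cf: "continuous_on UNIV f" and inj: "inj f" and ne: "f \<noteq> id" unfolding FF_def by auto
  show "inj_on f (MM f)" using inj inj_on_subset by blast
  show "\<And>x. x \<in> MM f \<Longrightarrow> f x \<noteq> x" unfolding MM_def by blast
  have "open {x. f x \<noteq> (\<lambda>x. x) x}" by (rule open_Collect_neq[OF cf continuous_on_id])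
  then have op: "open {x. f x \<noteq> x}" by simp
  then have "open ({x. f x \<noteq> x} - KK)" using closed_KK by (rule open_Diff)
  moreover have "{x. f x \<noteq> x} - KK \<noteq> {}"
  proof
    assume "{x. f x \<noteq> x} - KK = {}"
    then have "{x. f x \<noteq> x} \<subseteq> interior KK" using op interior_maximal by blast
    then have "{x. f x \<noteq> x} = {}" using interior_KK by blast
    then show False using ne by auto
  qed
  ultimately obtain y r where "r > 0" "ball y r \<subseteq> {x. f x \<noteq> x} - KK"
    by (meson ex_in_conv open_contains_ball)
  moreover have "{x. f x \<noteq> x} - KK = MM f" unfolding MM_def by blast
  ultimately show "|UNIV::real set| \<le>o |MM f|" using card_ball by metis
qed

lemma rigid:
  assumes Bp: "\<forall>f\<in>FF. \<exists>x\<in>MM f. (x \<in> B) = ((f x \<in> B) = (\<not> f 0 < f 1))"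
    and i1: "idl \<J>1" and i2: "idl \<J>2"
    and hm: "homeomorphic_maps (dtop (CI B \<J>1)) (subtopology (dtop (CI B \<J>2)) S) h k"
  shows "h = id \<and> S = UNIV \<and> dtop (CI B \<J>1) = dtop (CI B \<J>2)"
proof -
  have g1: "goodI (CI B \<J>1)" and g2: "goodI (CI B \<J>2)" using goodI_CI i1 i2 by blast+
  note E = embed[OF g1 g2 hm]
  have inj: "inj h" and rng: "range h = S" and cont: "continuous_on UNIV h" using E by blast+
  have hid: "h = id"
  proof (rule ccontr)
    assume ne: "h \<noteq> id"
    show False using E
    proof (elim conjE disjE)
      assume incr: "\<forall>x y. x < y \<longrightarrow> h x < h y"
        and tr: "\<forall>x. (RT (dtop (CI B \<J>1)) x \<longleftrightarrow> RT (dtop (CI B \<J>2)) (h x)) \<and> (LT (dtop (CI B \<J>1)) x \<longleftrightarrow> LT (dtop (CI B \<J>2)) (h x))"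
      have nk: "h x \<notin> KK" if "x \<notin> KK" for x
      proof
        assume "h x \<in> KK"
        then have "RT (dtop (CI B \<J>2)) (h x) \<and> LT (dtop (CI B \<J>2)) (h x)" using types(1)[OF i2] by blast
        then have "RT (dtop (CI B \<J>1)) x \<and> LT (dtop (CI B \<J>1)) x" using tr by blast
        then show False using types(2,3)[OF i1 that] by blast
      qed
      then have "h \<in> FF" unfolding FF_def using cont inj ne by blast
      then obtain x where x: "x \<in> MM h" "(x \<in> B) = ((h x \<in> B) = (\<not> h 0 < h 1))" using Bp by blast
      have xK: "x \<notin> KK" using x(1) unfolding MM_def by blast
      have "h 0 < h 1" using incr by simp
      then have "(x \<in> B) = (h x \<notin> B)" using x(2) by simp
      moreover have "(x \<in> B) = (h x \<in> B)"
        using types(2)[OF i1 xK] types(2)[OF i2 nk[OF xK]] tr by blast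
      ultimately show False by blast
    next
      assume decr: "\<forall>x y. x < y \<longrightarrow> h y < h x"
        and tr: "\<forall>x. (RT (dtop (CI B \<J>1)) x \<longleftrightarrow> LT (dtop (CI B \<J>2)) (h x)) \<and> (LT (dtop (CI B \<J>1)) x \<longleftrightarrow> RT (dtop (CI B \<J>2)) (h x))"
      have nk: "h x \<notin> KK" if "x \<notin> KK" for x
      proof
        assume "h x \<in> KK"
        then have "RT (dtop (CI B \<J>2)) (h x) \<and> LT (dtop (CI B \<J>2)) (h x)" using types(1)[OF i2] by blast
        then have "RT (dtop (CI B \<J>1)) x \<and> LT (dtop (CI B \<J>1)) x" using tr by blast
        then show False using types(2,3)[OF i1 that] by blast
      qed
      then have "h \<in> FF" unfolding FF_def using cont inj ne by blast
      then obtain x where x: "x \<in> MM h" "(x \<in> B) = ((h x \<in> B) = (\<not> h 0 < h 1))" using Bp by blast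
      have xK: "x \<notin> KK" using x(1) unfolding MM_def by blast
      have "\<not> h 0 < h 1" using decr by (metis zero_less_one order.asym)
      then have "(x \<in> B) = (h x \<in> B)" using x(2) by simp
      moreover have "(x \<in> B) = (h x \<notin> B)"
        using types(2)[OF i1 xK] types(3)[OF i2 nk[OF xK]] tr by blast
      ultimately show False by blast
    qed
  qed
  have SU: "S = UNIV" using rng hid by simp
  have kid: "k y = y" for y
  proof -
    have "k (h y) = y" using hm topspace_dtop[OF g1] unfolding homeomorphic_maps_def by auto
    then show ?thesis using hid by simp
  qed
  have c1: "continuous_map (dtop (CI B \<J>1)) (dtop (CI B \<J>2)) id"
    using hm hid SU unfolding homeomorphic_maps_def by simp
  have c2: "continuous_map (dtop (CI B \<J>2)) (dtop (CI B \<J>1)) id"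
  proof -
    have "k = id" using kid by auto
    then show ?thesis using hm SU unfolding homeomorphic_maps_def by simp
  qed
  have "openin (dtop (CI B \<J>1)) U \<longleftrightarrow> openin (dtop (CI B \<J>2)) U" for U
  proof
    assume "openin (dtop (CI B \<J>2)) U"
    then have "openin (dtop (CI B \<J>1)) {x \<in> topspace (dtop (CI B \<J>1)). id x \<in> U}" using c1 unfolding continuous_map by blast
    then show "openin (dtop (CI B \<J>1)) U" using topspace_dtop[OF g1] by simp
  next
    assume "openin (dtop (CI B \<J>1)) U"
    then have "openin (dtop (CI B \<J>2)) {x \<in> topspace (dtop (CI B \<J>2)). id x \<in> U}" using c2 unfolding continuous_map by blast
    then show "openin (dtop (CI B \<J>2)) U" using topspace_dtop[OF g2] by simp
  qed
  then have "dtop (CI B \<J>1) = dtop (CI B \<J>2)" using topology_eq by blast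
  then show ?thesis using hid SU by blast
qed


definition dig :: "nat \<Rightarrow> (nat \<Rightarrow> bool) \<Rightarrow> nat \<Rightarrow> bool" where
  "dig n c j = (j = n \<or> (n < j \<and> c (j - Suc n)))"

lemma dig_inj: assumes "dig n c = dig n' c'" shows "n = n' \<and> c = c'"
proof -
  have nn: "n = n'"
  proof (rule ccontr)
    assume "n \<noteq> n'"
    then consider "n < n'" | "n' < n" by linarith
    then show False
    proof cases
      case 1
      have "dig n c n" unfolding dig_def by simp
      moreover have "\<not> dig n' c' n" unfolding dig_def using 1 by simp
      ultimately show False using assms by simp
    next
      case 2
      have "dig n' c' n'" unfolding dig_def by simp
      moreover have "\<not> dig n c n'" unfolding dig_def using 2 by simp
      ultimately show False using assms by simp
    qed
  qed
  have "c m = c' m" for m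
  proof -
    have "dig n c (m + Suc n) = dig n' c' (m + Suc n)" using assms by simp
    then show ?thesis unfolding dig_def using nn by simp
  qed
  then show ?thesis using nn by blast
qed

lemma pre_False: "pre n (\<lambda>_. False) = 0"
  by (induction n) auto

lemma cg_dig: "0 < cg (dig n c) \<and> cg (dig n c) \<le> 1 / 3^n"
proof -
  have p: "pre n (dig n c) = 0"
    using pre_cong[of n "dig n c" "\<lambda>_. False"] pre_False unfolding dig_def by simp
  have h: "(\<lambda>m. dig n c (m + n)) 0" unfolding dig_def by simp
  have "2/3 \<le> cg (\<lambda>m. dig n c (m + n))" by (rule cg_head_true) (simp add: dig_def)
  moreover have "cg (\<lambda>m. dig n c (m + n)) \<le> 1" by (rule cg_le1)
  moreover have "3^n * cg (dig n c) = cg (\<lambda>m. dig n c (m + n))" using cg_shift[of n "dig n c"] p by simp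
  ultimately have "2/3 \<le> 3^n * cg (dig n c)" "3^n * cg (dig n c) \<le> 1" by simp_all
  then have A: "0 < 3^n * cg (dig n c)" and B: "3^n * cg (dig n c) \<le> 1" by linarith+
  from A have "0 < cg (dig n c)" by (simp add: zero_less_mult_iff)
  moreover from B have "cg (dig n c) \<le> 1 / 3^n" by (simp add: field_simps)
  ultimately show ?thesis by blast
qed

definition tcode :: "nat \<Rightarrow> (nat \<Rightarrow> real) \<Rightarrow> (nat \<Rightarrow> bool) \<Rightarrow> nat \<Rightarrow> bool" where
  "tcode k w b p = (case prod_decode p of (i, m) \<Rightarrow> if i = 0 then m = k else if i = 1 then b m else fseq w m)"

lemma tcode_inj: assumes "tcode k w b = tcode k' w' b'" shows "k = k' \<and> w = w' \<and> b = b'"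
proof -
  have "tcode k w b (prod_encode (0, k)) = tcode k' w' b' (prod_encode (0, k))" using assms by simp
  then have kk: "k = k'" unfolding tcode_def by simp
  have "b m = b' m" for m
  proof -
    have "tcode k w b (prod_encode (1, m)) = tcode k' w' b' (prod_encode (1, m))" using assms by simp
    then show ?thesis unfolding tcode_def by simp
  qed
  then have bb: "b = b'" by blast
  have "fseq w m = fseq w' m" for m
  proof -
    have "tcode k w b (prod_encode (2, m)) = tcode k' w' b' (prod_encode (2, m))" using assms by simp
    then show ?thesis unfolding tcode_def by simp
  qed
  then have "fseq w = fseq w'" by blast
  then have "w = w'" using inj_fseq by (simp add: inj_eq)
  then show ?thesis using kk bb by blast
qed

definition emb :: "nat \<times> nat \<times> (nat \<Rightarrow> real) \<times> (nat \<Rightarrow> bool) \<Rightarrow> real" where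
  "emb t = (case t of (n, k, w, b) \<Rightarrow> cg (dig n (tcode k w b)))"

lemma emb_inj: "inj emb"
proof (rule injI)
  fix s t assume eq: "emb s = emb t"
  obtain n k w b where s: "s = (n, k, w, b)" by (cases s) auto
  obtain n' k' w' b' where t: "t = (n', k', w', b')" by (cases t) auto
  have "dig n (tcode k w b) = dig n' (tcode k' w' b')" using eq cg_inj unfolding s t emb_def by (simp add: inj_eq)
  then have "n = n'" "tcode k w b = tcode k' w' b'" using dig_inj by blast+
  then show "s = t" using tcode_inj s t by blast
qed

lemma emb_KK: "emb t \<in> KK"
  unfolding emb_def by (cases t) (auto simp: cg_in_KK)

lemma emb_bound: "emb (n, k, w, b) > 0 \<and> emb (n, k, w, b) \<le> 1 / 3^n"
  unfolding emb_def using cg_dig by simp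

definition AX :: "real set \<Rightarrow> real set" where
  "AX X = emb ` {(n, k, w, b). \<forall>i<k. (w i \<in> X \<longleftrightarrow> b i)}"

lemma AX_KK: "AX X \<subseteq> KK" unfolding AX_def using emb_KK by blast

lemma AX_0: "0 \<notin> AX X"
proof
  assume "0 \<in> AX X"
  then obtain n k w b where "0 = emb (n, k, w, b)" unfolding AX_def by blast
  then show False using emb_bound[of n k w b] by simp
qed

lemma AX_wit:
  assumes fin: "finite F" and X: "X \<notin> F" and e: "e > 0"
  shows "\<exists>a\<in>AX X. \<bar>a\<bar> < e \<and> a \<notin> \<Union>(AX ` F)"
proof -
  obtain ys where ys: "set ys = F" using finite_list[OF fin] by blast
  define k where "k = length ys"
  have ex: "\<exists>z. (z \<in> X) \<noteq> (z \<in> ys ! i)" if "i < k" for i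
  proof -
    have "ys ! i \<in> F" using that ys unfolding k_def by auto
    then have "ys ! i \<noteq> X" using X by blast
    then show ?thesis by blast
  qed
  define w where "w i = (SOME z. (z \<in> X) \<noteq> (z \<in> ys ! i))" for i
  have w: "(w i \<in> X) \<noteq> (w i \<in> ys ! i)" if "i < k" for i
    unfolding w_def using someI_ex[OF ex[OF that]] .
  define b where "b i = (w i \<in> X)" for i
  obtain n :: nat where n: "1/e < 3^n" using real_arch_pow[of 3 "1/e"] by auto
  then have n': "1/3^n < e" using e by (simp add: field_simps)
  define t where "t = (n, k, w, b)"
  have tin: "t \<in> {(n, k, w, b). \<forall>i<k. (w i \<in> X \<longleftrightarrow> b i)}" unfolding t_def b_def by simp
  have "emb t \<in> AX X" unfolding AX_def using tin by blast
  moreover have "\<bar>emb t\<bar> < e" using emb_bound[of n k w b] n' unfolding t_def by simp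
  moreover have "emb t \<notin> \<Union>(AX ` F)"
  proof
    assume "emb t \<in> \<Union>(AX ` F)"
    then obtain Y where Y: "Y \<in> F" "emb t \<in> AX Y" by blast
    then obtain t' where t': "t' \<in> {(n, k, w, b). \<forall>i<k. (w i \<in> Y \<longleftrightarrow> b i)}" "emb t = emb t'"
      unfolding AX_def by blast
    then have "t = t'" using emb_inj by (simp add: inj_eq)
    then have "t' = (n, k, w, b)" unfolding t_def by simp
    then have all: "\<forall>i<k. (w i \<in> Y \<longleftrightarrow> b i)" using t'(1) by simp
    obtain i where i: "i < k" "ys ! i = Y" using Y(1) ys unfolding k_def by (metis in_set_conv_nth)
    have "(w i \<in> Y) = (w i \<in> X)" using all i(1) unfolding b_def by blast
    then show False using w[OF i(1)] i(2) by simp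
  qed
  ultimately show ?thesis by blast
qed

definition Jid :: "real set set \<Rightarrow> real set set" where
  "Jid \<X> = {C. \<exists>F. finite F \<and> F \<subseteq> \<X> \<and> C \<subseteq> \<Union>(AX ` F)}"

lemma idl_Jid: "idl (Jid \<X>)"
  unfolding idl_def Jid_def
proof (intro conjI ballI allI impI)
  show "{} \<in> {C. \<exists>F. finite F \<and> F \<subseteq> \<X> \<and> C \<subseteq> \<Union> (AX ` F)}" by blast
next
  fix A B assume "A \<in> {C. \<exists>F. finite F \<and> F \<subseteq> \<X> \<and> C \<subseteq> \<Union> (AX ` F)}" "B \<in> {C. \<exists>F. finite F \<and> F \<subseteq> \<X> \<and> C \<subseteq> \<Union> (AX ` F)}"
  then obtain F1 F2 where "finite F1" "F1 \<subseteq> \<X>" "A \<subseteq> \<Union> (AX ` F1)" "finite F2" "F2 \<subseteq> \<X>" "B \<subseteq> \<Union> (AX ` F2)" by blast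
  then have "finite (F1 \<union> F2) \<and> F1 \<union> F2 \<subseteq> \<X> \<and> A \<union> B \<subseteq> \<Union> (AX ` (F1 \<union> F2))" by auto
  then show "A \<union> B \<in> {C. \<exists>F. finite F \<and> F \<subseteq> \<X> \<and> C \<subseteq> \<Union> (AX ` F)}" by blast
next
  fix A B assume "A \<in> {C. \<exists>F. finite F \<and> F \<subseteq> \<X> \<and> C \<subseteq> \<Union> (AX ` F)}" "B \<subseteq> A"
  then show "B \<in> {C. \<exists>F. finite F \<and> F \<subseteq> \<X> \<and> C \<subseteq> \<Union> (AX ` F)}" by blast
qed

lemma sub_KK_noacc: assumes "C \<subseteq> KK" "z \<notin> KK" shows "\<not> rac C z" "\<not> lac C z"
proof -
  have "open (- KK)" using closed_KK by (simp add: closed_def)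
  then obtain r where r: "r > 0" "ball z r \<subseteq> - KK" using assms(2) open_contains_ball by blast
  show "\<not> rac C z"
  proof
    assume "rac C z"
    then obtain c where "c \<in> C" "z < c" "c < z + r" using r(1) unfolding rac_def by blast
    then have "c \<in> ball z r" by (simp add: dist_real_def)
    then show False using r(2) assms(1) \<open>c \<in> C\<close> by blast
  qed
  show "\<not> lac C z"
  proof
    assume "lac C z"
    then obtain c where "c \<in> C" "z - r < c" "c < z" using r(1) unfolding lac_def by blast
    then have "c \<in> ball z r" by (simp add: dist_real_def)
    then show False using r(2) assms(1) \<open>c \<in> C\<close> by blast
  qed
qed

lemma Phi_sep:
  assumes X1: "X \<in> \<X>1" and X2: "X \<notin> \<X>2"
  shows "dtop (CI B (Jid \<X>1)) \<noteq> dtop (CI B (Jid \<X>2))"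
proof
  assume eq: "dtop (CI B (Jid \<X>1)) = dtop (CI B (Jid \<X>2))"
  have g1: "goodI (CI B (Jid \<X>1))" and g2: "goodI (CI B (Jid \<X>2))" using goodI_CI idl_Jid by blast+
  have AXin: "AX X \<in> CI B (Jid \<X>1)"
  proof -
    have "AX X \<inter> DD = {}" using AX_KK DD_KK by blast
    moreover have "AX X \<inter> KK \<in> Jid \<X>1" unfolding Jid_def using X1 by (intro CollectI exI[of _ "{X}"]) auto
    moreover have "\<forall>z. z \<notin> KK \<longrightarrow> (z \<in> B \<longrightarrow> \<not> lac (AX X) z) \<and> (z \<notin> B \<longrightarrow> \<not> rac (AX X) z)"
      using sub_KK_noacc[OF AX_KK] by blast
    ultimately show ?thesis unfolding CI_def by blast
  qed
  have "openin (dtop (CI B (Jid \<X>1))) (- AX X)"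
  proof (rule openin_dtopI[OF g1])
    fix z assume "z \<in> - AX X"
    have "ball z 1 - AX X \<subseteq> - AX X" by blast
    then show "\<exists>e>0. \<exists>C\<in>CI B (Jid \<X>1). ball z e - C \<subseteq> - AX X" using AXin by (intro exI[of _ 1]) auto
  qed
  then have "openin (dtop (CI B (Jid \<X>2))) (- AX X)" using eq by simp
  moreover have "0 \<in> - AX X" using AX_0 by blast
  ultimately obtain e C where eC: "e > 0" "C \<in> CI B (Jid \<X>2)" "ball 0 e - C \<subseteq> - AX X"
    using openin_dtopD[OF g2] by blast
  have "C \<inter> KK \<in> Jid \<X>2" using eC(2) unfolding CI_def by blast
  then obtain F where F: "finite F" "F \<subseteq> \<X>2" "C \<inter> KK \<subseteq> \<Union>(AX ` F)" unfolding Jid_def by blast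
  have "X \<notin> F" using F(2) X2 by blast
  then obtain a where a: "a \<in> AX X" "\<bar>a\<bar> < e" "a \<notin> \<Union>(AX ` F)" using AX_wit[OF F(1) _ eC(1)] by blast
  have "a \<in> ball 0 e" using a(2) by (simp add: dist_real_def)
  moreover have "a \<notin> C" using a(1,3) AX_KK F(3) by blast
  ultimately have "a \<in> - AX X" using eC(3) by blast
  then show False using a(1) by blast
qed

theorem theorem6:
  shows "\<exists>E. (\<forall>\<tau>\<in>E. finer_than_euclidean \<tau>) \<and> E \<approx> Pow (Pow (UNIV :: real set)) \<and>
    (\<forall>\<tau>\<in>E. Gamma \<tau> = UNIV \<and> Hausdorff_space \<tau> \<and> separable_space \<tau> \<and> connected_space \<tau>) \<and>
    incomparable_family E id"
proof -
  obtain B where Bp: "\<forall>f\<in>FF. \<exists>x\<in>MM f. (x \<in> B) = ((f x \<in> B) = (\<not> f 0 < f 1))" using exB by blast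
  define Phi where "Phi \<X> = dtop (CI B (Jid \<X>))" for \<X>
  define E where "E = Phi ` Pow (Pow (UNIV :: real set))"
  have g: "goodI (CI B (Jid \<X>))" for \<X> using goodI_CI idl_Jid by blast
  have inj: "inj_on Phi (Pow (Pow (UNIV :: real set)))"
  proof (rule inj_onI)
    fix \<X>1 \<X>2 :: "real set set" assume eq: "Phi \<X>1 = Phi \<X>2"
    show "\<X>1 = \<X>2"
    proof (rule ccontr)
      assume "\<X>1 \<noteq> \<X>2"
      then obtain X where "(X \<in> \<X>1 \<and> X \<notin> \<X>2) \<or> (X \<in> \<X>2 \<and> X \<notin> \<X>1)" by blast
      then show False using Phi_sep[of X \<X>1 \<X>2 B] Phi_sep[of X \<X>2 \<X>1 B] eq unfolding Phi_def by metis
    qed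
  qed
  have fin: "\<forall>\<tau>\<in>E. finer_than_euclidean \<tau>"
    unfolding E_def Phi_def finer_than_euclidean_def using topspace_dtop[OF g] open_dtop[OF g] by blast
  have eqp: "E \<approx> Pow (Pow (UNIV :: real set))"
    unfolding E_def using inj_on_image_eqpoll_self[OF inj] .
  have props: "\<forall>\<tau>\<in>E. Gamma \<tau> = UNIV \<and> Hausdorff_space \<tau> \<and> separable_space \<tau> \<and> connected_space \<tau>"
  proof
    fix \<tau> assume "\<tau> \<in> E"
    then obtain \<X> where t: "\<tau> = dtop (CI B (Jid \<X>))" unfolding E_def Phi_def by blast
    show "Gamma \<tau> = UNIV \<and> Hausdorff_space \<tau> \<and> separable_space \<tau> \<and> connected_space \<tau>"
      unfolding t using Gamma_dtop[OF g gamma_cond[OF idl_Jid]] Hausdorff_dtop[OF g] separable_dtop[OF g] connected_dtop[OF g]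
      by blast
  qed
  have inc: "incomparable_family E id"
    unfolding incomparable_family_def
  proof (intro ballI allI impI)
    fix i j S assume i: "i \<in> E" and j: "j \<in> E" and H: "S \<subseteq> topspace (id j) \<and> id i homeomorphic_space subtopology (id j) S"
    obtain \<X>1 where t1: "i = dtop (CI B (Jid \<X>1))" using i unfolding E_def Phi_def by blast
    obtain \<X>2 where t2: "j = dtop (CI B (Jid \<X>2))" using j unfolding E_def Phi_def by blast
    obtain h k where hm: "homeomorphic_maps (dtop (CI B (Jid \<X>1))) (subtopology (dtop (CI B (Jid \<X>2))) S) h k"
      using H unfolding t1 t2 homeomorphic_space_def by auto
    have "h = id \<and> S = UNIV \<and> dtop (CI B (Jid \<X>1)) = dtop (CI B (Jid \<X>2))"
      by (rule rigid[OF Bp idl_Jid idl_Jid hm])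
    then show "i = j \<and> S = topspace (id j)" unfolding t1 t2 using topspace_dtop[OF g] by simp
  qed
  show ?thesis using fin eqp props inc by blast
qed


end
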